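(* Let $p_1,p_2\ge 0$ with $p_1+p_2\le 1$. For every $n\ge 1$, the expected value of the subtree number index of the random polyphenylene chain $RPC(n,p_1,p_2)$ is \[ E(\mathrm{STN}(RPC(n,p_1,p_2)))=\frac{441}{(11+4p_1+p_2)^2}(12+4p_1+p_2)^n+\frac{144p_1+36p_2-45}{11+4p_1+p_2}\,n-\frac{441}{(11+4p_1+p_2)^2}. \]
   Context: For a graph $G$, $\mathrm{STN}(G)$ is the number of nonempty subtrees of $G$ (subgraphs that are trees, single vertices included). A polyphenylene chain with $n$ hexagons consists of hexagons (6-cycles) $H_1,\dots,H_n$, pairwise vertex-disjoint, where for each $i=1,\dots,n-1$ one vertex of $H_i$ is joined to one vertex of $H_{i+1}$ by a single edge (a cut edge), and there are no other edges. For $2\le i\le n-1$, the hexagon $H_i$ has two distinct vertices incident to cut edges (toward $H_{i-1}$ and $H_{i+1}$); their distance in $H_i$ is $1$ (ortho), $2$ (meta) or $3$ (para). The random polyphenylene chain $RPC(n,p_1,p_2)$ is built by stepwise addition of terminal hexagons: for $n\le 2$ the chain is unique, and at each step $i=3,\dots,n$, the new hexagon $H_i$ is attached by a cut edge to a vertex of $H_{i-1}$ that is at distance $1$ (ortho) from the vertex of $H_{i-1}$ attached to $H_{i-2}$ with probability $p_1$, at distance $2$ (meta) with probability $p_2$, and at distance $3$ (para) with probability $1-p_1-p_2$, independently at each step. *)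

theory Defs
  imports Complex_Main 
begin

definition graph_connected :: "'a set \<Rightarrow> 'a set set \<Rightarrow> bool" where
  "graph_connected V E \<longleftrightarrow>
     (\<forall>u\<in>V. \<forall>v\<in>V. (\<lambda>x y. {x, y} \<in> E)\<^sup>*\<^sup>* u v)"

definition graph_acyclic :: "'a set \<Rightarrow> 'a set set \<Rightarrow> bool" where
  "graph_acyclic V E \<longleftrightarrow>
     \<not> (\<exists>cs. length cs \<ge> 3 \<and> distinct cs \<and> set cs \<subseteq> V \<and>
            (\<forall>i<length cs. {cs ! i, cs ! ((i + 1) mod length cs)} \<in> E))"

definition is_tree :: "'a set \<Rightarrow> 'a set set \<Rightarrow> bool" where
  "is_tree V E \<longleftrightarrow> graph_connected V E \<and> graph_acyclic V E"

definition subtrees :: "'a set \<Rightarrow> 'a set set \<Rightarrow> ('a set \<times> 'a set set) set" where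
  "subtrees V E = {(V', E'). V' \<noteq> {} \<and> V' \<subseteq> V \<and> E' \<subseteq> E \<and> (\<forall>e\<in>E'. e \<subseteq> V') \<and> is_tree V' E'}"

definition STN :: "'a set \<Rightarrow> 'a set set \<Rightarrow> nat" where
  "STN V E = card (subtrees V E)"

text \<open>Hexagon i (i < n) has vertices (i,0),...,(i,5) in cyclic order. For i \<ge> 1 the cut edge
  towards hexagon i-1 is at vertex (i,0). The cut edge from hexagon 0 towards hexagon 1 leaves
  vertex (0,0); for 1 \<le> i \<le> n-2 the cut edge towards hexagon i+1 leaves vertex (i, ds!(i-1)),
  which is at distance ds!(i-1) \<in> {1,2,3} (ortho/meta/para) from (i,0).\<close>

definition pc_vertices :: "nat \<Rightarrow> (nat \<times> nat) set" where
  "pc_vertices n = {(i, j). i < n \<and> j < 6}"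

definition pc_exit :: "nat list \<Rightarrow> nat \<Rightarrow> nat" where
  "pc_exit ds i = (if i = 0 then 0 else ds ! (i - 1))"

definition pc_edges :: "nat \<Rightarrow> nat list \<Rightarrow> (nat \<times> nat) set set" where
  "pc_edges n ds =
     {{(i, j), (i, (j + 1) mod 6)} | i j. i < n \<and> j < 6}
   \<union> {{(i, pc_exit ds i), (i + 1, 0)} | i. i + 1 < n}"

text \<open>Probability of attachment type d (1 = ortho, 2 = meta, 3 = para).\<close>
definition type_prob :: "real \<Rightarrow> real \<Rightarrow> nat \<Rightarrow> real" where
  "type_prob p1 p2 d = (if d = 1 then p1 else if d = 2 then p2 else 1 - p1 - p2)"

text \<open>Outcomes: the types of the steps i = 3..n, i.e. lists of length n-2 over {1,2,3};
  steps are independent so an outcome has the product probability.\<close>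
definition rpc_outcomes :: "nat \<Rightarrow> nat list set" where
  "rpc_outcomes n = {ds. length ds = n - 2 \<and> set ds \<subseteq> {1, 2, 3}}"

definition expected_STN_RPC :: "nat \<Rightarrow> real \<Rightarrow> real \<Rightarrow> real" where
  "expected_STN_RPC n p1 p2 =
     (\<Sum>ds\<in>rpc_outcomes n. (\<Prod>d\<leftarrow>ds. type_prob p1 p2 d) * real (STN (pc_vertices n) (pc_edges n ds)))"

end

theory Submission
  imports Defs "HOL-Library.Transitive_Closure_Table"
begin

abbreviation reach :: "'a set set \<Rightarrow> 'a \<Rightarrow> 'a \<Rightarrow> bool" where
  "reach E \<equiv> (\<lambda>x y. {x, y} \<in> E)\<^sup>*\<^sup>*"

lemma reach_sym: "reach E x y \<Longrightarrow> reach E y x"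
proof (induction rule: rtranclp_induct)
  case base then show ?case by simp
next
  case (step y z)
  have "{z, y} \<in> E" using step(2) by (simp add: insert_commute)
  then show ?case using step(3) by (meson converse_rtranclp_into_rtranclp)
qed

lemma reach_mono: "reach E x y \<Longrightarrow> E \<subseteq> F \<Longrightarrow> reach F x y"
  by (metis (no_types, lifting) mono_rtranclp subsetD)

lemma reach_closed:
  assumes "reach F a v" "a \<in> C" "\<And>x y. {x, y} \<in> F \<Longrightarrow> x \<in> C \<Longrightarrow> y \<in> C"
  shows "v \<in> C"
  using assms by (induction rule: rtranclp_induct) auto

lemma acyclic_mono:
  "graph_acyclic V' E' \<Longrightarrow> V'' \<subseteq> V' \<Longrightarrow> E'' \<subseteq> E' \<Longrightarrow> graph_acyclic V'' E''"
  unfolding graph_acyclic_def by blast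

lemma subtrees_mono: "V \<subseteq> W \<Longrightarrow> E \<subseteq> F \<Longrightarrow> subtrees V E \<subseteq> subtrees W F"
  unfolding subtrees_def by auto

lemma finite_subtrees: "finite V \<Longrightarrow> finite E \<Longrightarrow> finite (subtrees V E)"
  by (rule finite_subset[of _ "Pow V \<times> Pow E"]) (auto simp: subtrees_def)

lemma path_cycle:
  assumes acyc: "graph_acyclic V' E'" and e: "{a, b} \<in> E'" and ab: "a \<noteq> b"
    and r: "reach (E' - {{a, b}}) a b" and sub: "\<forall>f\<in>E'. f \<subseteq> V'" and aV: "a \<in> V'"
  shows False
proof -
  let ?R = "\<lambda>x y. {x, y} \<in> E' - {{a, b}}"
  obtain xs0 where "rtrancl_path ?R a xs0 b" using r rtranclp_eq_rtrancl_path by metis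
  then obtain xs where p: "rtrancl_path ?R a xs b" and d: "distinct (a # xs)"
    using rtrancl_path_distinct by metis
  have ne: "xs \<noteq> []" using p ab by (auto elim: rtrancl_path.cases)
  have lastb: "last xs = b" using rtrancl_path_last[OF p ne] .
  have nth: "{(a # xs) ! i, xs ! i} \<in> E' - {{a, b}}" if "i < length xs" for i
    using rtrancl_path_nth[OF p that] by simp
  have len: "length xs \<ge> 2"
  proof (rule ccontr)
    assume "\<not> length xs \<ge> 2"
    with ne obtain y where xs: "xs = [y]" by (cases xs) (auto, metis Suc_leI length_greater_0_conv not_less_eq_eq)
    then have "y = b" using lastb by simp
    then show False using nth[of 0] xs by simp
  qed
  let ?cs = "a # xs"
  have "length ?cs \<ge> 3" using len by simp
  moreover have "distinct ?cs" using d .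
  moreover have "set ?cs \<subseteq> V'"
  proof
    fix v assume "v \<in> set ?cs"
    then obtain i where i: "i < length ?cs" "?cs ! i = v" by (metis in_set_conv_nth)
    show "v \<in> V'"
    proof (cases i)
      case 0 then show ?thesis using i aV by simp
    next
      case (Suc j)
      then have "j < length xs" using i by simp
      then have "{(a # xs) ! j, xs ! j} \<in> E'" using nth by blast
      then show ?thesis using sub i Suc by auto
    qed
  qed
  moreover have "\<forall>i<length ?cs. {?cs ! i, ?cs ! ((i + 1) mod length ?cs)} \<in> E'"
  proof (intro allI impI)
    fix i assume i: "i < length ?cs"
    show "{?cs ! i, ?cs ! ((i + 1) mod length ?cs)} \<in> E'"
    proof (cases "i < length xs")
      case True
      then have "(i + 1) mod length ?cs = i + 1" by simp
      then show ?thesis using nth[OF True] by simp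
    next
      case False
      then have ii: "i = length xs" using i by simp
      then have "(i + 1) mod length ?cs = 0" by simp
      moreover have "?cs ! i = b" using ii lastb ne by (simp add: last_conv_nth)
      ultimately show ?thesis using e by (simp add: insert_commute)
    qed
  qed
  ultimately show False using acyc unfolding graph_acyclic_def by blast
qed


lemma reach_empty: "reach {} u v \<Longrightarrow> u = v"
  by (induction rule: rtranclp_induct) auto

lemma subtrees_empty: "subtrees V {} = (\<lambda>v. ({v}, {}::'a set set)) ` (V::'a set)"
proof
  show "subtrees V {} \<subseteq> (\<lambda>v. ({v}, {}::'a set set)) ` V"
  proof
    fix T assume T: "T \<in> subtrees V {}"
    obtain V' E' where TT: "T = (V', E')" by fastforce
    have E': "E' = {}" and ne: "V' \<noteq> {}" and sub: "V' \<subseteq> V" and con: "graph_connected V' E'"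
      using T TT by (auto simp: subtrees_def is_tree_def)
    obtain v where v: "v \<in> V'" using ne by blast
    have "\<forall>u\<in>V'. reach {} v u" using con v unfolding E' graph_connected_def by blast
    then have "\<forall>u\<in>V'. u = v" using reach_empty by metis
    then have "V' = {v}" using v by blast
    then show "T \<in> (\<lambda>v. ({v}, {}::'a set set)) ` V" using TT E' sub by auto
  qed
next
  show "(\<lambda>v. ({v}, {}::'a set set)) ` V \<subseteq> subtrees V {}"
  proof
    fix T assume "T \<in> (\<lambda>v. ({v}, {}::'a set set)) ` V"
    then obtain v where v: "v \<in> V" "T = ({v}, {})" by blast
    have "graph_connected {v} {}" unfolding graph_connected_def by simp
    moreover have "graph_acyclic {v} {}" unfolding graph_acyclic_def
      by (auto, metis length_greater_0_conv list.size(3) not_numeral_le_zero)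
    ultimately show "T \<in> subtrees V {}" using v by (auto simp: subtrees_def is_tree_def)
  qed
qed


lemma subtree_side:
  assumes T: "(V', E') \<in> subtrees (VA \<union> VB) (EA \<union> EB)"
    and disj: "VA \<inter> VB = {}" and EA: "\<forall>f\<in>EA. f \<subseteq> VA" and EB: "\<forall>f\<in>EB. f \<subseteq> VB"
    and neB: "{} \<notin> EB"
    and v0: "v0 \<in> V'" "v0 \<in> VA"
  shows "(V', E') \<in> subtrees VA EA"
proof -
  have con: "graph_connected V' E'" and EE: "E' \<subseteq> EA \<union> EB" and eV: "\<forall>e\<in>E'. e \<subseteq> V'"
    and acyc: "graph_acyclic V' E'" and ne: "V' \<noteq> {}"
    using T by (auto simp: subtrees_def is_tree_def)
  have VA': "V' \<subseteq> VA"
  proof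
    fix v assume "v \<in> V'"
    then have "reach E' v0 v" using con v0 unfolding graph_connected_def by blast
    then show "v \<in> VA"
    proof (rule reach_closed)
      show "v0 \<in> VA" by fact
      fix x y assume xy: "{x, y} \<in> E'" and x: "x \<in> VA"
      show "y \<in> VA"
      proof (cases "{x, y} \<in> EA")
        case True then show ?thesis using EA by auto
      next
        case False
        then have "{x, y} \<in> EB" using xy EE by auto
        then have "x \<in> VB" using EB by auto
        then show ?thesis using x disj by auto
      qed
    qed
  qed
  have "E' \<subseteq> EA"
  proof
    fix f assume f: "f \<in> E'"
    show "f \<in> EA"
    proof (rule ccontr)
      assume "f \<notin> EA"
      then have "f \<in> EB" using f EE by auto
      then have "f \<subseteq> VB" "f \<noteq> {}" using EB neB by auto
      moreover have "f \<subseteq> VA" using f eV VA' by blast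
      ultimately show False using disj by blast
    qed
  qed
  then show ?thesis using T VA' unfolding subtrees_def by auto
qed

lemma subtrees_union:
  assumes disj: "VA \<inter> VB = {}" and EA: "\<forall>f\<in>EA. f \<subseteq> VA" and EB: "\<forall>f\<in>EB. f \<subseteq> VB"
    and neA: "{} \<notin> EA" and neB: "{} \<notin> EB"
  shows "subtrees (VA \<union> VB) (EA \<union> EB) = subtrees VA EA \<union> subtrees VB EB"
proof
  show "subtrees (VA \<union> VB) (EA \<union> EB) \<subseteq> subtrees VA EA \<union> subtrees VB EB"
  proof
    fix T assume T: "T \<in> subtrees (VA \<union> VB) (EA \<union> EB)"
    obtain V' E' where TT: "T = (V', E')" by fastforce
    obtain v0 where v0: "v0 \<in> V'" using T TT by (auto simp: subtrees_def)
    have "v0 \<in> VA \<union> VB" using T TT v0 by (auto simp: subtrees_def)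
    then show "T \<in> subtrees VA EA \<union> subtrees VB EB"
    proof
      assume "v0 \<in> VA"
      then have "(V', E') \<in> subtrees VA EA" using subtree_side[of V' E' VA VB EA EB v0] T TT v0 disj EA EB neB by blast
      then show ?thesis using TT by blast
    next
      assume "v0 \<in> VB"
      then have "(V', E') \<in> subtrees VB EB"
        using subtree_side[of V' E' VB VA EB EA v0] T TT v0 disj EA EB neA by (simp add: Un_commute Int_commute)
      then show ?thesis using TT by blast
    qed
  qed
next
  show "subtrees VA EA \<union> subtrees VB EB \<subseteq> subtrees (VA \<union> VB) (EA \<union> EB)"
    using subtrees_mono[of VA "VA \<union> VB" EA "EA \<union> EB"] subtrees_mono[of VB "VA \<union> VB" EB "EA \<union> EB"] by blast
qed

lemma subtrees_disjoint:
  assumes "VA \<inter> VB = {}"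
  shows "subtrees VA EA \<inter> subtrees VB EB = {}"
  using assms unfolding subtrees_def by auto


definition join :: "'a set \<Rightarrow> ('a set \<times> 'a set set) \<times> ('a set \<times> 'a set set) \<Rightarrow> 'a set \<times> 'a set set" where
  "join e p = (fst (fst p) \<union> fst (snd p), insert e (snd (fst p) \<union> snd (snd p)))"

definition pairs :: "'a set \<Rightarrow> 'a set set \<Rightarrow> 'a \<Rightarrow> 'a \<Rightarrow> (('a set \<times> 'a set set) \<times> ('a set \<times> 'a set set)) set" where
  "pairs V E0 a b = {(T1, T2). T1 \<in> subtrees V E0 \<and> T2 \<in> subtrees V E0 \<and> a \<in> fst T1 \<and> b \<in> fst T2 \<and> fst T1 \<inter> fst T2 = {}}"

lemma side_around:
  fixes cs :: "'a list" and Q :: "'a \<Rightarrow> bool"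
  assumes L: "length cs = L" "i < L"
    and step: "\<And>k. k < L \<Longrightarrow> k \<noteq> i \<Longrightarrow> Q (cs ! k) = Q (cs ! ((k + 1) mod L))"
  shows "Q (cs ! ((i + 1) mod L)) = Q (cs ! i)"
proof -
  have A: "\<forall>j. j < L \<longrightarrow> Q (cs ! ((i + 1 + j) mod L)) = Q (cs ! ((i + 1) mod L))"
  proof (intro allI)
    fix j show "j < L \<longrightarrow> Q (cs ! ((i + 1 + j) mod L)) = Q (cs ! ((i + 1) mod L))"
    proof (induction j)
      case 0 then show ?case by simp
    next
      case (Suc j)
      show ?case
      proof
        assume sj: "Suc j < L"
        let ?k = "(i + 1 + j) mod L"
        have kL: "?k < L" using sj by simp
        have ki: "?k \<noteq> i"
        proof
          assume h: "?k = i"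
          show False
          proof (cases "i + 1 + j < L")
            case True then show False using h by simp
          next
            case False
            then have "(i + 1 + j) mod L = i + 1 + j - L"
              using L(2) sj by (simp add: mod_if)
            then show False using h L(2) sj False by linarith
          qed
        qed
        have k1: "(?k + 1) mod L = (i + 1 + Suc j) mod L" by (simp add: mod_Suc_eq)
        show "Q (cs ! ((i + 1 + Suc j) mod L)) = Q (cs ! ((i + 1) mod L))"
          using step[OF kL ki] k1 Suc sj by simp
      qed
    qed
  qed
  have "L - 1 < L" using L(2) by simp
  then have "Q (cs ! ((i + 1 + (L - 1)) mod L)) = Q (cs ! ((i + 1) mod L))" using A by blast
  moreover have "(i + 1 + (L - 1)) mod L = i" using L by simp
  ultimately show ?thesis by simp
qed


lemma join_in:
  assumes ab: "a \<noteq> b" and eE0: "{a, b} \<notin> E0" and form: "\<forall>f\<in>E0. \<exists>x y. f = {x, y}"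
    and p: "p \<in> pairs V E0 a b"
  shows "join {a, b} p \<in> subtrees V (insert {a, b} E0)"
proof -
  obtain V1 E1 V2 E2 where pp: "p = ((V1, E1), (V2, E2))" by (metis prod.collapse)
  have T1: "(V1, E1) \<in> subtrees V E0" and T2: "(V2, E2) \<in> subtrees V E0"
    and a1: "a \<in> V1" and b2: "b \<in> V2" and disj: "V1 \<inter> V2 = {}"
    using p pp by (auto simp: pairs_def)
  have sub1: "V1 \<subseteq> V" "E1 \<subseteq> E0" "\<forall>f\<in>E1. f \<subseteq> V1" and con1: "graph_connected V1 E1"
    and ac1: "graph_acyclic V1 E1"
    using T1 by (auto simp: subtrees_def is_tree_def)
  have sub2: "V2 \<subseteq> V" "E2 \<subseteq> E0" "\<forall>f\<in>E2. f \<subseteq> V2" and con2: "graph_connected V2 E2"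
    and ac2: "graph_acyclic V2 E2"
    using T2 by (auto simp: subtrees_def is_tree_def)
  let ?V = "V1 \<union> V2" and ?E = "insert {a, b} (E1 \<union> E2)"
  have jp: "join {a, b} p = (?V, ?E)" using pp by (simp add: join_def)
  have r1: "reach ?E u v" if "u \<in> V1" "v \<in> V1" for u v
  proof -
    have "reach E1 u v" using con1 that unfolding graph_connected_def by blast
    then show ?thesis by (rule reach_mono) blast
  qed
  have r2: "reach ?E u v" if "u \<in> V2" "v \<in> V2" for u v
  proof -
    have "reach E2 u v" using con2 that unfolding graph_connected_def by blast
    then show ?thesis by (rule reach_mono) blast
  qed
  have rab: "reach ?E a b" by (rule r_into_rtranclp) simp
  have r12: "reach ?E u v" if "u \<in> V1" "v \<in> V2" for u v
    using r1[OF that(1) a1] rab r2[OF b2 that(2)] by (meson rtranclp_trans)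
  have con: "graph_connected ?V ?E" unfolding graph_connected_def
  proof (intro ballI)
    fix u v assume u: "u \<in> ?V" and v: "v \<in> ?V"
    show "reach ?E u v"
    proof (cases "u \<in> V1")
      case True
      show ?thesis
      proof (cases "v \<in> V1")
        case True then show ?thesis using r1 \<open>u \<in> V1\<close> by blast
      next
        case False then show ?thesis using r12 \<open>u \<in> V1\<close> v by blast
      qed
    next
      case False
      then have u2: "u \<in> V2" using u by blast
      show ?thesis
      proof (cases "v \<in> V1")
        case True then show ?thesis using r12[OF True u2] reach_sym by metis
      next
        case False then show ?thesis using r2 u2 v by blast
      qed
    qed
  qed
  have acyc: "graph_acyclic ?V ?E" unfolding graph_acyclic_def
  proof
    assume "\<exists>cs. length cs \<ge> 3 \<and> distinct cs \<and> set cs \<subseteq> ?V \<and>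
            (\<forall>i<length cs. {cs ! i, cs ! ((i + 1) mod length cs)} \<in> ?E)"
    then obtain cs where L3: "length cs \<ge> 3" and dis: "distinct cs" and sV: "set cs \<subseteq> ?V"
      and ed: "\<forall>i<length cs. {cs ! i, cs ! ((i + 1) mod length cs)} \<in> ?E" by blast
    define L where "L = length cs"
    have side: "(cs ! k \<in> V1) = (cs ! ((k + 1) mod L) \<in> V1)"
      if "k < L" "{cs ! k, cs ! ((k + 1) mod L)} \<noteq> {a, b}" for k
    proof -
      have "{cs ! k, cs ! ((k + 1) mod L)} \<in> E1 \<union> E2" using ed that L_def by auto
      then show ?thesis
      proof
        assume "{cs ! k, cs ! ((k + 1) mod L)} \<in> E1"
        then have "{cs ! k, cs ! ((k + 1) mod L)} \<subseteq> V1" using sub1(3) by blast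
        then show ?thesis by simp
      next
        assume "{cs ! k, cs ! ((k + 1) mod L)} \<in> E2"
        then have "{cs ! k, cs ! ((k + 1) mod L)} \<subseteq> V2" using sub2(3) by blast
        then show ?thesis using disj by auto
      qed
    qed
    show False
    proof (cases "\<exists>i<L. {cs ! i, cs ! ((i + 1) mod L)} = {a, b}")
      case True
      then obtain i where i: "i < L" "{cs ! i, cs ! ((i + 1) mod L)} = {a, b}" by blast
      have other: "{cs ! k, cs ! ((k + 1) mod L)} \<noteq> {a, b}" if "k < L" "k \<noteq> i" for k
      proof
        assume h: "{cs ! k, cs ! ((k + 1) mod L)} = {a, b}"
        have i1: "(i + 1) mod L < L" "(k + 1) mod L < L" using i that by auto
        have "cs ! k \<noteq> cs ! i" using nth_eq_iff_index_eq[OF dis] that i(1) L_def by simp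
        moreover have "{cs ! k, cs ! ((k + 1) mod L)} = {cs ! i, cs ! ((i + 1) mod L)}"
          using h i(2) by simp
        ultimately have "cs ! k = cs ! ((i + 1) mod L) \<and> cs ! ((k + 1) mod L) = cs ! i"
          by (simp add: doubleton_eq_iff)
        then have c1: "cs ! k = cs ! ((i + 1) mod L)" and c2: "cs ! ((k + 1) mod L) = cs ! i" by auto
        have "k = (i + 1) mod L"
          using nth_eq_iff_index_eq[OF dis, of k "(i + 1) mod L"] c1 that(1) i1(1) L_def by simp
        moreover have "(k + 1) mod L = i"
          using nth_eq_iff_index_eq[OF dis, of "(k + 1) mod L" i] c2 i(1) i1(2) L_def by simp
        ultimately have "k = (i + 1) mod L" "(k + 1) mod L = i" by auto
        then have m2: "(i + 2) mod L = i" by (simp add: mod_Suc_eq)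
        show False
        proof (cases "i + 2 < L")
          case True then show False using m2 by simp
        next
          case False
          then have "(i + 2) mod L = (i + 2 - L) mod L" by (simp add: mod_if)
          also have "\<dots> = i + 2 - L" using L3 L_def i(1) by simp
          finally show False using m2 False L3 L_def by linarith
        qed
      qed
      have "(cs ! ((i + 1) mod L) \<in> V1) = (cs ! i \<in> V1)"
      proof (rule side_around[of cs L i "\<lambda>v. v \<in> V1"])
        show "length cs = L" using L_def by simp
        show "i < L" using i(1) .
        fix k assume "k < L" "k \<noteq> i"
        then show "(cs ! k \<in> V1) = (cs ! ((k + 1) mod L) \<in> V1)"
          using side[OF \<open>k < L\<close> other[OF \<open>k < L\<close> \<open>k \<noteq> i\<close>]] by simp
      qed
      moreover have "a \<in> V1" "b \<notin> V1" using a1 b2 disj by auto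
      ultimately show False using i(2) ab by (auto simp: doubleton_eq_iff)
    next
      case False
      have nab: "{cs ! k, cs ! ((k + 1) mod L)} \<noteq> {a, b}" if "k < L" for k
        using False that by blast
      have all: "(cs ! k \<in> V1) = (cs ! 0 \<in> V1)" if "k < L" for k
        using that
      proof (induction k)
        case 0 then show ?case by simp
      next
        case (Suc k)
        then have kL: "k < L" by simp
        have "(cs ! k \<in> V1) = (cs ! ((k + 1) mod L) \<in> V1)" by (rule side[OF kL nab[OF kL]])
        moreover have "(k + 1) mod L = Suc k" using Suc.prems by simp
        moreover have "(cs ! k \<in> V1) = (cs ! 0 \<in> V1)" using Suc.IH kL by blast
        ultimately show ?case by simp
      qed
      have inE: "{cs ! k, cs ! ((k + 1) mod L)} \<in> E1 \<union> E2" if "k < L" for k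
      proof -
        have "{cs ! k, cs ! ((k + 1) mod L)} \<in> ?E" using ed that L_def by simp
        then show ?thesis using nab[OF that] by simp
      qed
      have mem: "cs ! k \<in> set cs" if "k < L" for k using that L_def by simp
      show False
      proof (cases "cs ! 0 \<in> V1")
        case True
        have inV1: "set cs \<subseteq> V1"
        proof
          fix v assume "v \<in> set cs"
          then obtain k where k: "k < L" "cs ! k = v" using L_def by (auto simp: in_set_conv_nth)
          then show "v \<in> V1" using all[OF k(1)] True by simp
        qed
        have "{cs ! k, cs ! ((k + 1) mod length cs)} \<in> E1" if "k < length cs" for k
        proof -
          have kL: "k < L" using that L_def by simp
          have s: "cs ! k \<in> V1" using inV1 mem[OF kL] by blast
          have "{cs ! k, cs ! ((k + 1) mod L)} \<in> E1"
          proof (rule ccontr)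
            assume "{cs ! k, cs ! ((k + 1) mod L)} \<notin> E1"
            then have "{cs ! k, cs ! ((k + 1) mod L)} \<in> E2" using inE[OF kL] by blast
            then have "cs ! k \<in> V2" using sub2(3) by blast
            then show False using s disj by blast
          qed
          then show ?thesis using L_def by simp
        qed
        then have "3 \<le> length cs \<and> distinct cs \<and> set cs \<subseteq> V1 \<and>
            (\<forall>i<length cs. {cs ! i, cs ! ((i + 1) mod length cs)} \<in> E1)"
          using L3 dis inV1 by blast
        then show False using ac1 unfolding graph_acyclic_def by blast
      next
        case False
        have inV2: "set cs \<subseteq> V2"
        proof
          fix v assume "v \<in> set cs"
          then obtain k where k: "k < L" "cs ! k = v" using L_def by (auto simp: in_set_conv_nth)
          then have "v \<notin> V1" using all[OF k(1)] False by simp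
          moreover have "v \<in> ?V" using sV \<open>v \<in> set cs\<close> by blast
          ultimately show "v \<in> V2" by blast
        qed
        have "{cs ! k, cs ! ((k + 1) mod length cs)} \<in> E2" if "k < length cs" for k
        proof -
          have kL: "k < L" using that L_def by simp
          have s: "cs ! k \<in> V2" using inV2 mem[OF kL] by blast
          have "{cs ! k, cs ! ((k + 1) mod L)} \<in> E2"
          proof (rule ccontr)
            assume "{cs ! k, cs ! ((k + 1) mod L)} \<notin> E2"
            then have "{cs ! k, cs ! ((k + 1) mod L)} \<in> E1" using inE[OF kL] by blast
            then have "cs ! k \<in> V1" using sub1(3) by blast
            then show False using s disj by blast
          qed
          then show ?thesis using L_def by simp
        qed
        then have "3 \<le> length cs \<and> distinct cs \<and> set cs \<subseteq> V2 \<and>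
            (\<forall>i<length cs. {cs ! i, cs ! ((i + 1) mod length cs)} \<in> E2)"
          using L3 dis inV2 by blast
        then show False using ac2 unfolding graph_acyclic_def by blast
      qed
    qed
  qed
  show ?thesis unfolding jp subtrees_def is_tree_def
    using con acyc a1 b2 sub1 sub2 by auto
qed


lemma reach_restrict:
  assumes "reach F c u" and sub: "\<forall>f\<in>F. f \<subseteq> V'" and cV: "c \<in> V'"
  shows "reach {f \<in> F. f \<subseteq> {v \<in> V'. reach F c v}} c u"
  using assms(1)
proof (induction rule: rtranclp_induct)
  case base then show ?case by simp
next
  case (step y z)
  have yz: "{y, z} \<subseteq> V'" using step(2) sub by blast
  have "reach F c z" using step(1) step(2) by (rule rtranclp.rtrancl_into_rtrancl)
  then have "{y, z} \<subseteq> {v \<in> V'. reach F c v}" using yz step(1) by blast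
  then have "{y, z} \<in> {f \<in> F. f \<subseteq> {v \<in> V'. reach F c v}}" using step(2) by blast
  then show ?case using step(3) by (rule rtranclp.rtrancl_into_rtrancl[rotated])
qed

lemma comp_subtree:
  assumes cV: "c \<in> V'" and VV: "V' \<subseteq> V" and FE: "F \<subseteq> E0" and sub: "\<forall>f\<in>F. f \<subseteq> V'"
    and ac: "graph_acyclic V' F"
  shows "({v \<in> V'. reach F c v}, {f \<in> F. f \<subseteq> {v \<in> V'. reach F c v}}) \<in> subtrees V E0"
proof -
  let ?W = "{v \<in> V'. reach F c v}" and ?G = "{f \<in> F. f \<subseteq> {v \<in> V'. reach F c v}}"
  have cW: "c \<in> ?W" using cV by simp
  have rr: "reach ?G c u" if "u \<in> ?W" for u
    using reach_restrict[of F c u V'] that sub cV by blast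
  have con: "graph_connected ?W ?G" unfolding graph_connected_def
  proof (intro ballI)
    fix u v assume "u \<in> ?W" "v \<in> ?W"
    then have "reach ?G c u" "reach ?G c v" using rr by blast+
    then have "reach ?G u c" "reach ?G c v" using reach_sym[of ?G c u] by blast+
    then show "reach ?G u v" by (rule rtranclp_trans)
  qed
  have acW: "graph_acyclic ?W ?G" by (rule acyclic_mono[OF ac]) auto
  show ?thesis unfolding subtrees_def is_tree_def using con acW cW VV FE by auto
qed

lemma reach_two:
  assumes "reach E' a v" and "{a, b} \<in> E'"
  shows "reach (E' - {{a, b}}) a v \<or> reach (E' - {{a, b}}) b v"
  using assms(1)
proof (induction rule: rtranclp_induct)
  case base then show ?case by simp
next
  case (step y z)
  show ?case
  proof (cases "{y, z} = {a, b}")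
    case True
    then have "z = a \<or> z = b" by (auto simp: doubleton_eq_iff)
    then show ?thesis by auto
  next
    case False
    then have "{y, z} \<in> E' - {{a, b}}" using step(2) by simp
    then show ?thesis using step(3) by (meson rtranclp.rtrancl_into_rtrancl)
  qed
qed

lemma split_tree:
  assumes ab: "a \<noteq> b" and form: "\<forall>f\<in>E0. \<exists>x y. f = {x, y}"
    and T: "(V', E') \<in> subtrees V (insert {a, b} E0)" and e: "{a, b} \<in> E'"
  shows "(V', E') \<in> join {a, b} ` pairs V E0 a b"
proof -
  have ne: "V' \<noteq> {}" and VV: "V' \<subseteq> V" and EE: "E' \<subseteq> insert {a, b} E0"
    and sub: "\<forall>f\<in>E'. f \<subseteq> V'" and con: "graph_connected V' E'" and ac: "graph_acyclic V' E'"
    using T by (auto simp: subtrees_def is_tree_def)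
  define F where "F = E' - {{a, b}}"
  have FE0: "F \<subseteq> E0" unfolding F_def using EE by blast
  have FE': "F \<subseteq> E'" unfolding F_def by blast
  have subF: "\<forall>f\<in>F. f \<subseteq> V'" using sub FE' by blast
  have acF: "graph_acyclic V' F" using acyclic_mono[OF ac subset_refl FE'] .
  have aV: "a \<in> V'" and bV: "b \<in> V'" using sub e by auto
  define V1 where "V1 = {v \<in> V'. reach F a v}"
  define V2 where "V2 = {v \<in> V'. reach F b v}"
  define E1 where "E1 = {f \<in> F. f \<subseteq> V1}"
  define E2 where "E2 = {f \<in> F. f \<subseteq> V2}"
  have T1: "(V1, E1) \<in> subtrees V E0"
    unfolding V1_def E1_def by (rule comp_subtree[OF aV VV FE0 subF acF])
  have T2: "(V2, E2) \<in> subtrees V E0"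
    unfolding V2_def E2_def by (rule comp_subtree[OF bV VV FE0 subF acF])
  have a1: "a \<in> V1" using aV V1_def by simp
  have b2: "b \<in> V2" using bV V2_def by simp
  have disj: "V1 \<inter> V2 = {}"
  proof (rule ccontr)
    assume "V1 \<inter> V2 \<noteq> {}"
    then obtain v where r1: "reach F a v" and r2: "reach F b v" unfolding V1_def V2_def by blast
    have vb: "reach F v b" using reach_sym[OF r2] .
    have "reach F a b" using rtranclp_trans[OF r1 vb] .
    then have "reach (E' - {{a, b}}) a b" using F_def by simp
    then show False by (rule path_cycle[OF ac e ab _ sub aV])
  qed
  have cover: "V' = V1 \<union> V2"
  proof
    show "V' \<subseteq> V1 \<union> V2"
    proof
      fix v assume v: "v \<in> V'"
      then have "reach E' a v" using con aV unfolding graph_connected_def by blast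
      then have "reach (E' - {{a, b}}) a v \<or> reach (E' - {{a, b}}) b v" by (rule reach_two[OF _ e])
      then have "reach F a v \<or> reach F b v" using F_def by simp
      then show "v \<in> V1 \<union> V2" using v unfolding V1_def V2_def by blast
    qed
    show "V1 \<union> V2 \<subseteq> V'" unfolding V1_def V2_def by blast
  qed
  have Eeq: "E' = insert {a, b} (E1 \<union> E2)"
  proof
    show "insert {a, b} (E1 \<union> E2) \<subseteq> E'" unfolding E1_def E2_def using e FE' by blast
    show "E' \<subseteq> insert {a, b} (E1 \<union> E2)"
    proof
      fix f assume f: "f \<in> E'"
      show "f \<in> insert {a, b} (E1 \<union> E2)"
      proof (cases "f = {a, b}")
        case True then show ?thesis by simp
      next
        case False
        then have fF: "f \<in> F" using f F_def by simp
        then have fE0: "f \<in> E0" using FE0 by blast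
        have "\<exists>x y. f = {x, y}" by (rule bspec[OF form fE0])
        then obtain x y where xy: "f = {x, y}" by blast
        have xV: "x \<in> V'" and yV: "y \<in> V'" using fF subF xy by auto
        have fF': "{x, y} \<in> F" using fF xy by simp
        have "x \<in> V1 \<union> V2" using xV cover by blast
        then show ?thesis
        proof
          assume "x \<in> V1"
          then have "reach F a x" using V1_def by simp
          then have "reach F a y" using fF' by (rule rtranclp.rtrancl_into_rtrancl)
          then have "y \<in> V1" using yV V1_def by simp
          then have "f \<in> E1" using \<open>x \<in> V1\<close> xy fF E1_def by simp
          then show ?thesis by simp
        next
          assume "x \<in> V2"
          then have "reach F b x" using V2_def by simp
          then have "reach F b y" using fF' by (rule rtranclp.rtrancl_into_rtrancl)
          then have "y \<in> V2" using yV V2_def by simp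
          then have "f \<in> E2" using \<open>x \<in> V2\<close> xy fF E2_def by simp
          then show ?thesis by simp
        qed
      qed
    qed
  qed
  have p: "((V1, E1), (V2, E2)) \<in> pairs V E0 a b"
    unfolding pairs_def using T1 T2 a1 b2 disj by simp
  have "join {a, b} ((V1, E1), (V2, E2)) = (V', E')"
    using cover Eeq by (simp add: join_def)
  moreover have "join {a, b} ((V1, E1), (V2, E2)) \<in> join {a, b} ` pairs V E0 a b"
    using p by (rule imageI)
  ultimately show ?thesis by simp
qed

definition recov :: "'a set \<Rightarrow> 'a \<Rightarrow> 'a \<Rightarrow> 'a set \<times> 'a set set \<Rightarrow> ('a set \<times> 'a set set) \<times> ('a set \<times> 'a set set)" where
  "recov e a b T = (let F = snd T - {e}; W1 = {v. reach F a v}; W2 = {v. reach F b v}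
     in ((W1, {f \<in> F. f \<subseteq> W1}), (W2, {f \<in> F. f \<subseteq> W2})))"

lemma comp_eq:
  assumes T1: "(V1, E1) \<in> subtrees V E0" and T2: "(V2, E2) \<in> subtrees V E0"
    and a1: "a \<in> V1" and disj: "V1 \<inter> V2 = {}"
  shows "{v. reach (E1 \<union> E2) a v} = V1"
proof
  have sub1: "\<forall>f\<in>E1. f \<subseteq> V1" and con1: "graph_connected V1 E1"
    using T1 by (auto simp: subtrees_def is_tree_def)
  have sub2: "\<forall>f\<in>E2. f \<subseteq> V2" using T2 by (auto simp: subtrees_def)
  show "{v. reach (E1 \<union> E2) a v} \<subseteq> V1"
  proof
    fix v assume "v \<in> {v. reach (E1 \<union> E2) a v}"
    then have "reach (E1 \<union> E2) a v" by simp
    then show "v \<in> V1"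
    proof (rule reach_closed)
      show "a \<in> V1" by fact
      fix x y assume xy: "{x, y} \<in> E1 \<union> E2" and x: "x \<in> V1"
      show "y \<in> V1"
      proof (cases "{x, y} \<in> E1")
        case True then show ?thesis using sub1 by blast
      next
        case False
        then have "{x, y} \<in> E2" using xy by blast
        then have "x \<in> V2" using sub2 by blast
        then show ?thesis using x disj by blast
      qed
    qed
  qed
  show "V1 \<subseteq> {v. reach (E1 \<union> E2) a v}"
  proof
    fix v assume "v \<in> V1"
    then have "reach E1 a v" using con1 a1 unfolding graph_connected_def by blast
    then have "reach (E1 \<union> E2) a v" by (rule reach_mono) blast
    then show "v \<in> {v. reach (E1 \<union> E2) a v}" by simp
  qed
qed

lemma edges_eq:
  assumes T1: "(V1, E1) \<in> subtrees V E0" and T2: "(V2, E2) \<in> subtrees V E0"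
    and disj: "V1 \<inter> V2 = {}" and form: "\<forall>f\<in>E0. \<exists>x y. f = {x, y}"
  shows "{f \<in> E1 \<union> E2. f \<subseteq> V1} = E1"
proof -
  have sub1: "\<forall>f\<in>E1. f \<subseteq> V1" and sub2: "\<forall>f\<in>E2. f \<subseteq> V2" and E2E0: "E2 \<subseteq> E0"
    using T1 T2 by (auto simp: subtrees_def)
  have "f \<notin> E2" if "f \<subseteq> V1" for f
  proof
    assume f: "f \<in> E2"
    then have fE0: "f \<in> E0" using E2E0 by blast
    have "\<exists>x y. f = {x, y}" by (rule bspec[OF form fE0])
    then obtain x y where "f = {x, y}" by blast
    then have "x \<in> V1" "x \<in> V2" using f that sub2 by auto
    then show False using disj by blast
  qed
  then show ?thesis using sub1 by blast
qed

lemma recov_join: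
  assumes p: "p \<in> pairs V E0 a b" and eE0: "e \<notin> E0" and form: "\<forall>f\<in>E0. \<exists>x y. f = {x, y}"
  shows "recov e a b (join e p) = p"
proof -
  obtain V1 E1 V2 E2 where pp: "p = ((V1, E1), (V2, E2))" by (metis prod.collapse)
  have T1: "(V1, E1) \<in> subtrees V E0" and T2: "(V2, E2) \<in> subtrees V E0"
    and a1: "a \<in> V1" and b2: "b \<in> V2" and disj: "V1 \<inter> V2 = {}"
    using p pp by (auto simp: pairs_def)
  have E12: "E1 \<subseteq> E0" "E2 \<subseteq> E0" using T1 T2 by (auto simp: subtrees_def)
  have F: "snd (join e p) - {e} = E1 \<union> E2" using pp eE0 E12 by (auto simp: join_def)
  have c1: "{v. reach (E1 \<union> E2) a v} = V1" by (rule comp_eq[OF T1 T2 a1 disj])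
  have c2: "{v. reach (E1 \<union> E2) b v} = V2"
    using comp_eq[OF T2 T1 b2] disj by (simp add: Un_commute Int_commute)
  have d1: "{f \<in> E1 \<union> E2. f \<subseteq> V1} = E1" by (rule edges_eq[OF T1 T2 disj form])
  have d2: "{f \<in> E1 \<union> E2. f \<subseteq> V2} = E2"
    using edges_eq[OF T2 T1 _ form] disj by (simp add: Un_commute Int_commute)
  show ?thesis unfolding recov_def Let_def F c1 c2 d1 d2 using pp by simp
qed

lemma join_inj:
  assumes eE0: "e \<notin> E0" and form: "\<forall>f\<in>E0. \<exists>x y. f = {x, y}"
  shows "inj_on (join e) (pairs V E0 a b)"
  by (rule inj_on_inverseI[of _ "recov e a b"]) (rule recov_join[OF _ eE0 form])

lemma subtrees_insert:
  assumes ab: "a \<noteq> b" and eE0: "{a, b} \<notin> E0" and form: "\<forall>f\<in>E0. \<exists>x y. f = {x, y}"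
  shows "subtrees V (insert {a, b} E0) = subtrees V E0 \<union> join {a, b} ` pairs V E0 a b"
proof
  show "subtrees V (insert {a, b} E0) \<subseteq> subtrees V E0 \<union> join {a, b} ` pairs V E0 a b"
  proof
    fix T assume T: "T \<in> subtrees V (insert {a, b} E0)"
    obtain V' E' where TT: "T = (V', E')" by fastforce
    show "T \<in> subtrees V E0 \<union> join {a, b} ` pairs V E0 a b"
    proof (cases "{a, b} \<in> E'")
      case True
      then show ?thesis using split_tree[OF ab form, of V' E' V] T TT by blast
    next
      case False
      then have "T \<in> subtrees V E0" using T TT unfolding subtrees_def by auto
      then show ?thesis by blast
    qed
  qed
  show "subtrees V E0 \<union> join {a, b} ` pairs V E0 a b \<subseteq> subtrees V (insert {a, b} E0)"
    using subtrees_mono[of V V E0 "insert {a, b} E0"] join_in[OF ab eE0 form] by blast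
qed

lemma subtrees_insert_disj:
  assumes eE0: "e \<notin> E0"
  shows "subtrees V E0 \<inter> join e ` pairs V E0 a b = {}"
  using eE0 unfolding subtrees_def join_def by auto

lemma finite_pairs: "finite V \<Longrightarrow> finite E0 \<Longrightarrow> finite (pairs V E0 a b)"
  by (rule finite_subset[of _ "subtrees V E0 \<times> subtrees V E0"])
     (auto simp: pairs_def finite_subtrees)

lemma count_insert:
  assumes ab: "a \<noteq> b" and eE0: "{a, b} \<notin> E0" and form: "\<forall>f\<in>E0. \<exists>x y. f = {x, y}"
    and fin: "finite V" "finite E0"
  shows "card {T \<in> subtrees V (insert {a, b} E0). R \<subseteq> fst T} =
         card {T \<in> subtrees V E0. R \<subseteq> fst T} +
         card {p \<in> pairs V E0 a b. R \<subseteq> fst (fst p) \<union> fst (snd p)}"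
proof -
  let ?S = "{T \<in> subtrees V E0. R \<subseteq> fst T}" and ?P = "{p \<in> pairs V E0 a b. R \<subseteq> fst (fst p) \<union> fst (snd p)}"
  have eq: "{T \<in> subtrees V (insert {a, b} E0). R \<subseteq> fst T} = ?S \<union> join {a, b} ` ?P"
  proof -
    have gen: "{x \<in> A \<union> f ` B. Q x} = {x \<in> A. Q x} \<union> f ` {y \<in> B. Q (f y)}"
      for A B f and Q :: "'x \<Rightarrow> bool" by blast
    have fj: "fst (join e p) = fst (fst p) \<union> fst (snd p)" for e p by (simp add: join_def)
    show ?thesis by (simp only: subtrees_insert[OF ab eE0 form] gen fj)
  qed
  have f1: "finite ?S" using finite_subtrees[OF fin] by simp
  have f2: "finite (join {a, b} ` ?P)" using finite_pairs[OF fin] by simp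
  have dj: "?S \<inter> join {a, b} ` ?P = {}" using subtrees_insert_disj[OF eE0, of V a b] by blast
  have inj: "inj_on (join {a, b}) ?P"
    using join_inj[OF eE0 form, of V a b] by (rule inj_on_subset) blast
  show ?thesis unfolding eq card_Un_disjoint[OF f1 f2 dj] card_image[OF inj] ..
qed


lemma subtree_fst: "T \<in> subtrees V E \<Longrightarrow> fst T \<subseteq> V"
  unfolding subtrees_def by auto

lemma subtree_fst_ne: "T \<in> subtrees V E \<Longrightarrow> fst T \<noteq> {}"
  unfolding subtrees_def by auto

lemma bridge_count:
  assumes disj: "VA \<inter> VB = {}" and EA: "\<forall>f\<in>EA. f \<subseteq> VA" and EB: "\<forall>f\<in>EB. f \<subseteq> VB"
    and formA: "\<forall>f\<in>EA. \<exists>x y. f = {x, y}" and formB: "\<forall>f\<in>EB. \<exists>x y. f = {x, y}"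
    and a: "a \<in> VA" and b: "b \<in> VB"
    and fin: "finite VA" "finite VB" "finite EA" "finite EB" and R: "R \<subseteq> VB"
  shows "card {T \<in> subtrees (VA \<union> VB) (insert {a, b} (EA \<union> EB)). R \<subseteq> fst T} =
         card {T \<in> subtrees VA EA. R \<subseteq> fst T} + card {T \<in> subtrees VB EB. R \<subseteq> fst T} +
         card {T \<in> subtrees VA EA. a \<in> fst T} * card {T \<in> subtrees VB EB. insert b R \<subseteq> fst T}"
proof -
  have ab: "a \<noteq> b" using a b disj by blast
  have neA: "{} \<notin> EA" using formA by blast
  have neB: "{} \<notin> EB" using formB by blast
  have eE0: "{a, b} \<notin> EA \<union> EB"
  proof
    assume "{a, b} \<in> EA \<union> EB"
    then show False
    proof
      assume "{a, b} \<in> EA" then have "b \<in> VA" using EA by blast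
      then show False using b disj by blast
    next
      assume "{a, b} \<in> EB" then have "a \<in> VB" using EB by blast
      then show False using a disj by blast
    qed
  qed
  have form: "\<forall>f\<in>EA \<union> EB. \<exists>x y. f = {x, y}" using formA formB by blast
  have finV: "finite (VA \<union> VB)" and finE: "finite (EA \<union> EB)" using fin by auto
  have c1: "card {T \<in> subtrees (VA \<union> VB) (insert {a, b} (EA \<union> EB)). R \<subseteq> fst T} =
         card {T \<in> subtrees (VA \<union> VB) (EA \<union> EB). R \<subseteq> fst T} +
         card {p \<in> pairs (VA \<union> VB) (EA \<union> EB) a b. R \<subseteq> fst (fst p) \<union> fst (snd p)}"
    by (rule count_insert[OF ab eE0 form finV finE])
  have SU: "subtrees (VA \<union> VB) (EA \<union> EB) = subtrees VA EA \<union> subtrees VB EB"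
    by (rule subtrees_union[OF disj EA EB neA neB])
  have c2: "card {T \<in> subtrees (VA \<union> VB) (EA \<union> EB). R \<subseteq> fst T} =
            card {T \<in> subtrees VA EA. R \<subseteq> fst T} + card {T \<in> subtrees VB EB. R \<subseteq> fst T}"
  proof -
    have "{T \<in> subtrees (VA \<union> VB) (EA \<union> EB). R \<subseteq> fst T} =
          {T \<in> subtrees VA EA. R \<subseteq> fst T} \<union> {T \<in> subtrees VB EB. R \<subseteq> fst T}"
      unfolding SU by blast
    moreover have "finite {T \<in> subtrees VA EA. R \<subseteq> fst T}"
      using finite_subtrees[OF fin(1) fin(3)] by simp
    moreover have "finite {T \<in> subtrees VB EB. R \<subseteq> fst T}"
      using finite_subtrees[OF fin(2) fin(4)] by simp
    moreover have "{T \<in> subtrees VA EA. R \<subseteq> fst T} \<inter> {T \<in> subtrees VB EB. R \<subseteq> fst T} = {}"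
      using subtrees_disjoint[OF disj, of EA EB] by blast
    ultimately show ?thesis by (simp add: card_Un_disjoint)
  qed
  have PP: "{p \<in> pairs (VA \<union> VB) (EA \<union> EB) a b. R \<subseteq> fst (fst p) \<union> fst (snd p)} =
            {T \<in> subtrees VA EA. a \<in> fst T} \<times> {T \<in> subtrees VB EB. insert b R \<subseteq> fst T}"
  proof
    show "{p \<in> pairs (VA \<union> VB) (EA \<union> EB) a b. R \<subseteq> fst (fst p) \<union> fst (snd p)} \<subseteq>
            {T \<in> subtrees VA EA. a \<in> fst T} \<times> {T \<in> subtrees VB EB. insert b R \<subseteq> fst T}"
    proof
      fix p assume p: "p \<in> {p \<in> pairs (VA \<union> VB) (EA \<union> EB) a b. R \<subseteq> fst (fst p) \<union> fst (snd p)}"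
      obtain T1 T2 where pp: "p = (T1, T2)" by (rule prod.exhaust)
      have T1: "T1 \<in> subtrees VA EA \<union> subtrees VB EB" and T2: "T2 \<in> subtrees VA EA \<union> subtrees VB EB"
        and a1: "a \<in> fst T1" and b2: "b \<in> fst T2" and RR: "R \<subseteq> fst T1 \<union> fst T2"
        using p pp SU by (auto simp: pairs_def)
      have T1A: "T1 \<in> subtrees VA EA"
      proof (rule ccontr)
        assume "T1 \<notin> subtrees VA EA"
        then have "T1 \<in> subtrees VB EB" using T1 by blast
        then have "a \<in> VB" using a1 subtree_fst by blast
        then show False using a disj by blast
      qed
      have T2B: "T2 \<in> subtrees VB EB"
      proof (rule ccontr)
        assume "T2 \<notin> subtrees VB EB"
        then have "T2 \<in> subtrees VA EA" using T2 by blast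
        then have "b \<in> VA" using b2 subtree_fst by blast
        then show False using b disj by blast
      qed
      have "fst T1 \<subseteq> VA" using T1A subtree_fst by blast
      then have "R \<subseteq> fst T2" using RR R disj by blast
      then show "p \<in> {T \<in> subtrees VA EA. a \<in> fst T} \<times> {T \<in> subtrees VB EB. insert b R \<subseteq> fst T}"
        using pp T1A T2B a1 b2 by blast
    qed
    show "{T \<in> subtrees VA EA. a \<in> fst T} \<times> {T \<in> subtrees VB EB. insert b R \<subseteq> fst T} \<subseteq>
          {p \<in> pairs (VA \<union> VB) (EA \<union> EB) a b. R \<subseteq> fst (fst p) \<union> fst (snd p)}"
    proof
      fix p assume p: "p \<in> {T \<in> subtrees VA EA. a \<in> fst T} \<times> {T \<in> subtrees VB EB. insert b R \<subseteq> fst T}"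
      obtain T1 T2 where pp: "p = (T1, T2)" by (rule prod.exhaust)
      have T1A: "T1 \<in> subtrees VA EA" and T2B: "T2 \<in> subtrees VB EB" and a1: "a \<in> fst T1"
        and b2: "insert b R \<subseteq> fst T2" using p pp by auto
      have "fst T1 \<subseteq> VA" "fst T2 \<subseteq> VB" using T1A T2B subtree_fst by blast+
      then have dj: "fst T1 \<inter> fst T2 = {}" using disj by blast
      show "p \<in> {p \<in> pairs (VA \<union> VB) (EA \<union> EB) a b. R \<subseteq> fst (fst p) \<union> fst (snd p)}"
        unfolding pairs_def SU using pp T1A T2B a1 b2 dj by auto
    qed
  qed
  show ?thesis unfolding c1 c2 PP card_cartesian_product ..
qed


definition Ivs :: "nat \<Rightarrow> nat \<Rightarrow> nat \<Rightarrow> (nat \<times> nat) set" where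
  "Ivs i s t = {(i, j) | j. s \<le> j \<and> j \<le> t}"
definition Ive :: "nat \<Rightarrow> nat \<Rightarrow> nat \<Rightarrow> (nat \<times> nat) set set" where
  "Ive i s t = {{(i, j), (i, Suc j)} | j. s \<le> j \<and> j < t}"
definition Iv :: "nat \<Rightarrow> nat \<Rightarrow> nat \<Rightarrow> (nat \<times> nat) set \<times> (nat \<times> nat) set set" where
  "Iv i s t = (Ivs i s t, Ive i s t)"
definition PV :: "nat \<Rightarrow> nat \<Rightarrow> (nat \<times> nat) set" where
  "PV i m = {(i, j) | j. j < m}"
definition PE :: "nat \<Rightarrow> nat \<Rightarrow> (nat \<times> nat) set set" where
  "PE i m = {{(i, j), (i, Suc j)} | j. Suc j < m}"

lemma Iv_same: "Iv i m m = ({(i, m)}, {})"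
  unfolding Iv_def Ivs_def Ive_def by auto

lemma Iv_Suc:
  assumes "s \<le> k"
  shows "Iv i s (Suc k) = (Ivs i s k \<union> {(i, Suc k)}, insert {(i, k), (i, Suc k)} (Ive i s k \<union> {}))"
  using assms unfolding Iv_def Ivs_def Ive_def by (auto simp: le_Suc_eq less_Suc_eq)

lemma Ivs_mem: "(i', j) \<in> Ivs i s t \<longleftrightarrow> i' = i \<and> s \<le> j \<and> j \<le> t"
  unfolding Ivs_def by auto

lemma PE_sub: "\<forall>f\<in>PE i m. f \<subseteq> PV i m"
  unfolding PE_def PV_def by auto

lemma PE_form: "\<forall>f\<in>PE i m. \<exists>x y. f = {x, y}"
  unfolding PE_def by auto

lemma PE_ne: "{} \<notin> PE i m"
  unfolding PE_def by auto

lemma PV_Suc: "PV i (Suc m) = PV i m \<union> {(i, m)}"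
  unfolding PV_def by (auto simp: less_Suc_eq)

lemma PE_Suc: "PE i (Suc (Suc k)) = insert {(i, k), (i, Suc k)} (PE i (Suc k) \<union> {})"
  unfolding PE_def by (auto simp: less_Suc_eq)

lemma PE_1: "PE i (Suc 0) = {}"
  unfolding PE_def by auto

lemma subtrees_emptyV: "subtrees {} E = {}"
  unfolding subtrees_def by auto

lemma path_subtrees: "subtrees (PV i m) (PE i m) = {Iv i s t | s t. s \<le> t \<and> t < m}"
proof (induction m)
  case 0
  have "PV i 0 = {}" unfolding PV_def by simp
  then show ?case using subtrees_emptyV by simp
next
  case (Suc m)
  show ?case
  proof (cases m)
    case 0
    have "PV i (Suc 0) = {(i, 0)}" unfolding PV_def by auto
    then have "subtrees (PV i (Suc 0)) (PE i (Suc 0)) = {({(i, 0)}, {})}"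
      unfolding PE_1 subtrees_empty by simp
    moreover have "{Iv i s t | s t. s \<le> t \<and> t < Suc 0} = {Iv i 0 0}" by auto
    ultimately show ?thesis using 0 Iv_same[of i 0] by simp
  next
    case (Suc k)
    let ?a = "(i, k)" and ?b = "(i, m)"
    let ?V = "PV i m \<union> {(i, m)}" and ?E0 = "PE i m \<union> {}"
    have ab: "?a \<noteq> ?b" using Suc by simp
    have nin: "(i, m) \<notin> PV i m" unfolding PV_def by simp
    have eE0: "{?a, ?b} \<notin> ?E0"
    proof
      assume "{?a, ?b} \<in> ?E0"
      then have "?b \<in> PV i m" using PE_sub by blast
      then show False using nin by blast
    qed
    have form: "\<forall>f\<in>?E0. \<exists>x y. f = {x, y}" using PE_form by simp
    have SU: "subtrees ?V ?E0 = subtrees (PV i m) (PE i m) \<union> subtrees {(i, m)} {}"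
      by (rule subtrees_union) (use nin PE_sub PE_ne in auto)
    have S: "subtrees ?V ?E0 = {Iv i s t | s t. s \<le> t \<and> t < m} \<union> {({(i, m)}, {}::(nat \<times> nat) set set)}"
      unfolding SU Suc.IH subtrees_empty by simp
    have P: "pairs ?V ?E0 ?a ?b = {(Iv i s k, ({(i, m)}, {}::(nat \<times> nat) set set)) | s. s \<le> k}"
    proof
      show "pairs ?V ?E0 ?a ?b \<subseteq> {(Iv i s k, ({(i, m)}, {}::(nat \<times> nat) set set)) | s. s \<le> k}"
      proof
        fix p assume p: "p \<in> pairs ?V ?E0 ?a ?b"
        obtain T1 T2 where pp: "p = (T1, T2)" by (rule prod.exhaust)
        have T1: "T1 \<in> {Iv i s t | s t. s \<le> t \<and> t < m} \<union> {({(i, m)}, {}::(nat \<times> nat) set set)}"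
          and T2: "T2 \<in> {Iv i s t | s t. s \<le> t \<and> t < m} \<union> {({(i, m)}, {}::(nat \<times> nat) set set)}"
          and a1: "?a \<in> fst T1" and b2: "?b \<in> fst T2"
          using p pp S unfolding pairs_def by auto
        have "T1 \<noteq> ({(i, m)}, {}::(nat \<times> nat) set set)" using a1 ab by auto
        then obtain s t where T1e: "T1 = Iv i s t" "s \<le> t" "t < m" using T1 by blast
        then have "s \<le> k" "k \<le> t" using a1 unfolding Iv_def by (auto simp: Ivs_mem)
        then have st: "t = k" "s \<le> k" using T1e Suc by auto
        have "T2 = ({(i, m)}, {}::(nat \<times> nat) set set)"
        proof (rule ccontr)
          assume "T2 \<noteq> ({(i, m)}, {}::(nat \<times> nat) set set)"
          then obtain s' t' where "T2 = Iv i s' t'" "t' < m" using T2 by blast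
          then show False using b2 unfolding Iv_def by (auto simp: Ivs_mem)
        qed
        then show "p \<in> {(Iv i s k, ({(i, m)}, {}::(nat \<times> nat) set set)) | s. s \<le> k}" using pp T1e st by blast
      qed
      show "{(Iv i s k, ({(i, m)}, {}::(nat \<times> nat) set set)) | s. s \<le> k} \<subseteq> pairs ?V ?E0 ?a ?b"
      proof
        fix p assume "p \<in> {(Iv i s k, ({(i, m)}, {}::(nat \<times> nat) set set)) | s. s \<le> k}"
        then obtain s where pp: "p = (Iv i s k, ({(i, m)}, {}::(nat \<times> nat) set set))" "s \<le> k" by blast
        have "Iv i s k \<in> subtrees ?V ?E0" unfolding S using pp Suc by blast
        moreover have "({(i, m)}, {}::(nat \<times> nat) set set) \<in> subtrees ?V ?E0" unfolding S by blast
        moreover have "?a \<in> fst (Iv i s k)" using pp unfolding Iv_def by (simp add: Ivs_mem)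
        moreover have "Ivs i s k \<inter> {(i, m)} = {}" using Suc by (auto simp: Ivs_mem)
        ultimately show "p \<in> pairs ?V ?E0 ?a ?b" unfolding pairs_def using pp by (simp add: Iv_def)
      qed
    qed
    have J: "join {?a, ?b} ` {(Iv i s k, ({(i, m)}, {}::(nat \<times> nat) set set)) | s. s \<le> k} = {Iv i s m | s. s \<le> k}"
    proof -
      have "join {?a, ?b} (Iv i s k, ({(i, m)}, {}::(nat \<times> nat) set set)) = Iv i s m" if "s \<le> k" for s
        using Iv_Suc[OF that, of i] Suc unfolding join_def by (simp add: Iv_def)
      then show ?thesis by force
    qed
    have "subtrees (PV i (Suc m)) (PE i (Suc m)) = subtrees ?V (insert {?a, ?b} ?E0)"
      using Suc PV_Suc PE_Suc by simp
    also have "\<dots> = subtrees ?V ?E0 \<union> join {?a, ?b} ` pairs ?V ?E0 ?a ?b"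
      by (rule subtrees_insert[OF ab eE0 form])
    also have "\<dots> = {Iv i s t | s t. s \<le> t \<and> t < m} \<union> {Iv i m m} \<union> {Iv i s m | s. s \<le> k}"
      unfolding S P J Iv_same by simp
    also have "\<dots> = {Iv i s t | s t. s \<le> t \<and> t < Suc m}"
    proof
      show "{Iv i s t | s t. s \<le> t \<and> t < m} \<union> {Iv i m m} \<union> {Iv i s m | s. s \<le> k}
            \<subseteq> {Iv i s t | s t. s \<le> t \<and> t < Suc m}" using Suc by force
      show "{Iv i s t | s t. s \<le> t \<and> t < Suc m} \<subseteq>
            {Iv i s t | s t. s \<le> t \<and> t < m} \<union> {Iv i m m} \<union> {Iv i s m | s. s \<le> k}"
      proof
        fix T assume "T \<in> {Iv i s t | s t. s \<le> t \<and> t < Suc m}"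
        then obtain s t where T: "T = Iv i s t" "s \<le> t" "t < Suc m" by blast
        show "T \<in> {Iv i s t | s t. s \<le> t \<and> t < m} \<union> {Iv i m m} \<union> {Iv i s m | s. s \<le> k}"
        proof (cases "t < m")
          case True then show ?thesis using T by blast
        next
          case False
          then have tm: "t = m" using T by simp
          show ?thesis
          proof (cases "s = m")
            case True then show ?thesis using T tm by blast
          next
            case False then have "s \<le> k" using T tm Suc by simp
            then show ?thesis using T tm by blast
          qed
        qed
      qed
    qed
    finally show ?thesis .
  qed
qed


definition hexE :: "nat \<Rightarrow> (nat \<times> nat) set set" where
  "hexE i = {{(i, j), (i, (j + 1) mod 6)} | j. j < 6}"

lemma hexE_mem: "j < 6 \<Longrightarrow> {(i, j), (i, (j + 1) mod 6)} \<in> hexE i"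
  unfolding hexE_def by blast

lemma hexE_eq: "hexE i = insert {(i, 0), (i, 5)} (PE i 6)"
proof
  show "hexE i \<subseteq> insert {(i, 0), (i, 5)} (PE i 6)"
  proof
    fix f assume "f \<in> hexE i"
    then obtain j where j: "j < 6" "f = {(i, j), (i, (j + 1) mod 6)}" unfolding hexE_def by blast
    show "f \<in> insert {(i, 0), (i, 5)} (PE i 6)"
    proof (cases "j = 5")
      case True
      then have "f = {(i, 5), (i, 0)}" using j by simp
      also have "\<dots> = {(i, 0), (i, 5)}" by (rule insert_commute)
      finally have "f = {(i, 0), (i, 5)}" .
      then show ?thesis by (simp only: insertI1)
    next
      case False then have sj: "Suc j < 6" "(j + 1) mod 6 = Suc j" using j by auto
      then have "f = {(i, j), (i, Suc j)}" using j by simp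
      then have "f \<in> PE i 6" unfolding PE_def using sj by blast
      then show ?thesis by (rule insertI2)
    qed
  qed
  show "insert {(i, 0), (i, 5)} (PE i 6) \<subseteq> hexE i"
  proof
    fix f assume "f \<in> insert {(i, 0), (i, 5)} (PE i 6)"
    then show "f \<in> hexE i"
    proof
      assume f: "f = {(i, 0), (i, 5)}"
      have "{(i, 0::nat), (i, 5::nat)} = {(i, 5), (i, (5 + 1) mod 6)}" by auto
      then have "f = {(i, 5), (i, (5 + 1) mod 6)}" using f by simp
      then show ?thesis using hexE_mem[of 5 i] by simp
    next
      assume "f \<in> PE i 6"
      then obtain j where j: "Suc j < 6" "f = {(i, j), (i, Suc j)}" unfolding PE_def by blast
      then have "(j + 1) mod 6 = Suc j" by simp
      then have "f = {(i, j), (i, (j + 1) mod 6)}" using j by simp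
      moreover have "j < 6" using j by simp
      ultimately show ?thesis using hexE_mem[of j i] by simp
    qed
  qed
qed

lemma card_filter_image:
  assumes "inj_on f D"
  shows "card {x \<in> f ` D. Q x} = card {d \<in> D. Q (f d)}"
proof -
  have "{x \<in> f ` D. Q x} = f ` {d \<in> D. Q (f d)}" by blast
  moreover have "inj_on f {d \<in> D. Q (f d)}" using assms by (rule inj_on_subset) blast
  ultimately show ?thesis by (simp add: card_image)
qed

lemma Ivs_eq_D:
  assumes "Ivs i s t = Ivs i s' t'" "s \<le> t" "s' \<le> t'"
  shows "s = s' \<and> t = t'"
proof -
  have "(i, s) \<in> Ivs i s t" "(i, t) \<in> Ivs i s t" using assms(2) by (simp_all add: Ivs_mem)
  then have h1: "(i, s) \<in> Ivs i s' t'" "(i, t) \<in> Ivs i s' t'" using assms(1) by simp_all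
  have "(i, s') \<in> Ivs i s' t'" "(i, t') \<in> Ivs i s' t'" using assms(3) by (simp_all add: Ivs_mem)
  then have h2: "(i, s') \<in> Ivs i s t" "(i, t') \<in> Ivs i s t" using assms(1) by simp_all
  from h1 h2 show ?thesis unfolding Ivs_mem by linarith
qed

lemma Iv_inj: "inj_on (\<lambda>(s, t). Iv i s t) {(s, t). s \<le> t \<and> t < 6}"
proof (rule inj_onI)
  fix x y assume x: "x \<in> {(s, t). s \<le> t \<and> t < 6}" and y: "y \<in> {(s, t). s \<le> t \<and> t < 6}"
    and e: "(\<lambda>(s, t). Iv i s t) x = (\<lambda>(s, t). Iv i s t) y"
  obtain s t where xx: "x = (s, t)" by (rule prod.exhaust)
  obtain s' t' where yy: "y = (s', t')" by (rule prod.exhaust)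
  have "Ivs i s t = Ivs i s' t'" using e xx yy by (simp add: Iv_def)
  moreover have "s \<le> t" "s' \<le> t'" using x y xx yy by auto
  ultimately show "x = y" using Ivs_eq_D xx yy by blast
qed

lemma setcomp_image2: "{f s t | s t. P s t} = (\<lambda>(s, t). f s t) ` {(s, t). P s t}"
  by (auto simp: image_def)

lemma path6: "subtrees (PV i 6) (PE i 6) = (\<lambda>(s, t). Iv i s t) ` {(s, t). s \<le> t \<and> t < 6}"
  unfolding path_subtrees by (rule setcomp_image2)

lemma hex_pairs:
  "pairs (PV i 6) (PE i 6) (i, 0) (i, 5) =
   (\<lambda>(t, s). (Iv i 0 t, Iv i s 5)) ` {(t, s). t < s \<and> s < 6}"
proof
  show "pairs (PV i 6) (PE i 6) (i, 0) (i, 5) \<subseteq> (\<lambda>(t, s). (Iv i 0 t, Iv i s 5)) ` {(t, s). t < s \<and> s < 6}"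
  proof
    fix p assume p: "p \<in> pairs (PV i 6) (PE i 6) (i, 0) (i, 5)"
    obtain T1 T2 where pp: "p = (T1, T2)" by (rule prod.exhaust)
    have T1: "T1 \<in> subtrees (PV i 6) (PE i 6)" and T2: "T2 \<in> subtrees (PV i 6) (PE i 6)"
      and a1: "(i, 0) \<in> fst T1" and b2: "(i, 5) \<in> fst T2" and dj: "fst T1 \<inter> fst T2 = {}"
      using p pp unfolding pairs_def by auto
    obtain s1 t1 where T1e: "T1 = Iv i s1 t1" "s1 \<le> t1" "t1 < 6" using T1 unfolding path_subtrees by blast
    obtain s2 t2 where T2e: "T2 = Iv i s2 t2" "s2 \<le> t2" "t2 < 6" using T2 unfolding path_subtrees by blast
    have "s1 = 0" using a1 T1e by (simp add: Iv_def Ivs_mem)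
    moreover have "t2 = 5" using b2 T2e by (simp add: Iv_def Ivs_mem)
    moreover have "t1 < s2"
    proof (rule ccontr)
      assume "\<not> t1 < s2"
      then have "(i, s2) \<in> fst T1 \<inter> fst T2" using T1e T2e \<open>s1 = 0\<close> by (simp add: Iv_def Ivs_mem)
      then show False using dj by blast
    qed
    ultimately show "p \<in> (\<lambda>(t, s). (Iv i 0 t, Iv i s 5)) ` {(t, s). t < s \<and> s < 6}"
      using pp T1e T2e by force
  qed
  show "(\<lambda>(t, s). (Iv i 0 t, Iv i s 5)) ` {(t, s). t < s \<and> s < 6} \<subseteq> pairs (PV i 6) (PE i 6) (i, 0) (i, 5)"
  proof
    fix p assume "p \<in> (\<lambda>(t, s). (Iv i 0 t, Iv i s 5)) ` {(t, s). t < s \<and> s < 6}"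
    then obtain d where d: "d \<in> {(t, s). t < s \<and> s < 6}" "p = (\<lambda>(t, s). (Iv i 0 t, Iv i s 5)) d"
      by blast
    obtain t s where dd: "d = (t, s)" by (rule prod.exhaust)
    have ts: "p = (Iv i 0 t, Iv i s 5)" "t < s" "s < 6" using d dd by auto
    have t6: "t < 6" "0 \<le> t" "s \<le> 5" "(5::nat) < 6" using ts by auto
    have "Iv i 0 t \<in> subtrees (PV i 6) (PE i 6)" "Iv i s 5 \<in> subtrees (PV i 6) (PE i 6)"
      unfolding path_subtrees using t6 by blast+
    moreover have "Ivs i 0 t \<inter> Ivs i s 5 = {}" using ts by (auto simp: Ivs_mem)
    ultimately show "p \<in> pairs (PV i 6) (PE i 6) (i, 0) (i, 5)"
      unfolding pairs_def using ts by (simp add: Iv_def Ivs_mem)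
  qed
qed

lemma hex_pairs_inj: "inj_on (\<lambda>(t, s). (Iv i 0 t, Iv i s 5)) {(t, s). t < s \<and> s < 6}"
proof (rule inj_onI)
  fix x y assume x: "x \<in> {(t, s). t < s \<and> s < 6}" and y: "y \<in> {(t, s). t < s \<and> s < 6}"
    and e: "(\<lambda>(t, s). (Iv i 0 t, Iv i s 5)) x = (\<lambda>(t, s). (Iv i 0 t, Iv i s 5)) y"
  obtain t s where xx: "x = (t, s)" by (rule prod.exhaust)
  obtain t' s' where yy: "y = (t', s')" by (rule prod.exhaust)
  have "Ivs i 0 t = Ivs i 0 t'" "Ivs i s 5 = Ivs i s' 5" using e xx yy by (simp_all add: Iv_def)
  moreover have "s \<le> 5" "s' \<le> 5" using x y xx yy by auto
  ultimately have "t = t'" "s = s'" using Ivs_eq_D by blast+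
  then show "x = y" using xx yy by simp
qed

lemma finite_PV: "finite (PV i m)"
  unfolding PV_def by (rule finite_subset[of _ "{i} \<times> {..<m}"]) auto

lemma finite_PE: "finite (PE i m)"
proof -
  have "PE i m = (\<lambda>j. {(i, j), (i, Suc j)}) ` {j. Suc j < m}" unfolding PE_def by auto
  moreover have "finite {j. Suc j < m}" by (rule finite_subset[of _ "{..<m}"]) auto
  ultimately show ?thesis by simp
qed

lemma hex_count:
  "card {T \<in> subtrees (PV i 6) (hexE i). R \<subseteq> fst T} =
   card {(s, t). s \<le> t \<and> t < 6 \<and> R \<subseteq> Ivs i s t} +
   card {(t, s). t < s \<and> s < 6 \<and> R \<subseteq> Ivs i 0 t \<union> Ivs i s 5}"
proof -
  have ab: "(i, 0::nat) \<noteq> (i, 5)" by simp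
  have eE0: "{(i, 0), (i, 5)} \<notin> PE i 6"
  proof
    assume "{(i, 0), (i, 5)} \<in> PE i 6"
    then obtain j where "{(i, 0::nat), (i, 5::nat)} = {(i, j), (i, Suc j)}" unfolding PE_def by blast
    then show False by (auto simp: doubleton_eq_iff)
  qed
  have c: "card {T \<in> subtrees (PV i 6) (hexE i). R \<subseteq> fst T} =
        card {T \<in> subtrees (PV i 6) (PE i 6). R \<subseteq> fst T} +
        card {p \<in> pairs (PV i 6) (PE i 6) (i, 0) (i, 5). R \<subseteq> fst (fst p) \<union> fst (snd p)}"
    unfolding hexE_eq by (rule count_insert[OF ab eE0 PE_form finite_PV finite_PE])
  have c1: "card {T \<in> subtrees (PV i 6) (PE i 6). R \<subseteq> fst T} =
            card {(s, t). s \<le> t \<and> t < 6 \<and> R \<subseteq> Ivs i s t}"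
  proof -
    have "card {T \<in> subtrees (PV i 6) (PE i 6). R \<subseteq> fst T} =
          card {d \<in> {(s, t). s \<le> t \<and> t < 6}. R \<subseteq> fst ((\<lambda>(s, t). Iv i s t) d)}"
      unfolding path6 by (rule card_filter_image[OF Iv_inj])
    also have "{d \<in> {(s, t). s \<le> t \<and> t < 6}. R \<subseteq> fst ((\<lambda>(s, t). Iv i s t) d)} =
               {(s, t). s \<le> t \<and> t < 6 \<and> R \<subseteq> Ivs i s t}" by (auto simp: Iv_def)
    finally show ?thesis .
  qed
  have c2: "card {p \<in> pairs (PV i 6) (PE i 6) (i, 0) (i, 5). R \<subseteq> fst (fst p) \<union> fst (snd p)} =
            card {(t, s). t < s \<and> s < 6 \<and> R \<subseteq> Ivs i 0 t \<union> Ivs i s 5}"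
  proof -
    have "card {p \<in> pairs (PV i 6) (PE i 6) (i, 0) (i, 5). R \<subseteq> fst (fst p) \<union> fst (snd p)} =
          card {d \<in> {(t, s). t < s \<and> s < 6}. R \<subseteq> fst (fst ((\<lambda>(t, s). (Iv i 0 t, Iv i s 5)) d)) \<union>
                                               fst (snd ((\<lambda>(t, s). (Iv i 0 t, Iv i s 5)) d))}"
      unfolding hex_pairs by (rule card_filter_image[OF hex_pairs_inj])
    also have "{d \<in> {(t, s). t < s \<and> s < 6}. R \<subseteq> fst (fst ((\<lambda>(t, s). (Iv i 0 t, Iv i s 5)) d)) \<union>
                                               fst (snd ((\<lambda>(t, s). (Iv i 0 t, Iv i s 5)) d))} =
               {(t, s). t < s \<and> s < 6 \<and> R \<subseteq> Ivs i 0 t \<union> Ivs i s 5}" by (auto simp: Iv_def)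
    finally show ?thesis .
  qed
  show ?thesis using c c1 c2 by simp
qed

lemma card_pairs_sum:
  "card {(s, t). s < m \<and> t < (m::nat) \<and> Q s t} = (\<Sum>s<m. \<Sum>t<m. if Q s t then 1 else 0)"
proof -
  have "{(s, t). s < m \<and> t < m \<and> Q s t} = (SIGMA s:{..<m}. {t. t < m \<and> Q s t})" by auto
  then have "card {(s, t). s < m \<and> t < m \<and> Q s t} = (\<Sum>s<m. card {t. t < m \<and> Q s t})"
    by (simp add: card_SigmaI)
  also have "\<dots> = (\<Sum>s<m. \<Sum>t<m. if Q s t then 1 else 0)"
  proof (rule sum.cong[OF refl])
    fix s
    have "{t. t < m \<and> Q s t} = {..<m} \<inter> Collect (Q s)" by auto
    then show "card {t. t < m \<and> Q s t} = (\<Sum>t<m. if Q s t then 1 else 0)"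
      by (simp add: sum.If_cases)
  qed
  finally show ?thesis .
qed

lemma hex_count_gen:
  "card {T \<in> subtrees (PV i 6) (hexE i). R \<subseteq> fst T} =
   (\<Sum>s<6. \<Sum>t<6. if s \<le> t \<and> R \<subseteq> Ivs i s t then 1 else 0) +
   (\<Sum>t<6. \<Sum>s<6. if t < s \<and> R \<subseteq> Ivs i 0 t \<union> Ivs i s 5 then 1 else 0)"
proof -
  have e1: "{(s, t). s \<le> t \<and> t < 6 \<and> R \<subseteq> Ivs i s t} = {(s, t). s < 6 \<and> t < 6 \<and> (s \<le> t \<and> R \<subseteq> Ivs i s t)}"
    by auto
  have e2: "{(t, s). t < s \<and> s < 6 \<and> R \<subseteq> Ivs i 0 t \<union> Ivs i s 5} =
            {(t, s). t < 6 \<and> s < 6 \<and> (t < s \<and> R \<subseteq> Ivs i 0 t \<union> Ivs i s 5)}"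
    by auto
  show ?thesis unfolding hex_count e1 e2 card_pairs_sum ..
qed


lemma hex_all: "card {T \<in> subtrees (PV i 6) (hexE i). {} \<subseteq> fst T} = 36"
  unfolding hex_count_gen by (simp add: lessThan_Suc numeral_eq_Suc)

lemma hex_v0: "card {T \<in> subtrees (PV i 6) (hexE i). {(i, 0)} \<subseteq> fst T} = 21"
  unfolding hex_count_gen by (simp add: lessThan_Suc numeral_eq_Suc Ivs_mem)

lemma hex_v1: "card {T \<in> subtrees (PV i 6) (hexE i). {(i, 1)} \<subseteq> fst T} = 21"
  unfolding hex_count_gen by (simp add: lessThan_Suc numeral_eq_Suc Ivs_mem)

lemma hex_v2: "card {T \<in> subtrees (PV i 6) (hexE i). {(i, 2)} \<subseteq> fst T} = 21"
  unfolding hex_count_gen by (simp add: lessThan_Suc numeral_eq_Suc Ivs_mem)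

lemma hex_v3: "card {T \<in> subtrees (PV i 6) (hexE i). {(i, 3)} \<subseteq> fst T} = 21"
  unfolding hex_count_gen by (simp add: lessThan_Suc numeral_eq_Suc Ivs_mem)

lemma hex_e1: "card {T \<in> subtrees (PV i 6) (hexE i). {(i, 0), (i, 1)} \<subseteq> fst T} = 16"
  unfolding hex_count_gen by (simp add: lessThan_Suc numeral_eq_Suc Ivs_mem)

lemma hex_e2: "card {T \<in> subtrees (PV i 6) (hexE i). {(i, 0), (i, 2)} \<subseteq> fst T} = 13"
  unfolding hex_count_gen by (simp add: lessThan_Suc numeral_eq_Suc Ivs_mem)

lemma hex_e3: "card {T \<in> subtrees (PV i 6) (hexE i). {(i, 0), (i, 3)} \<subseteq> fst T} = 12"
  unfolding hex_count_gen by (simp add: lessThan_Suc numeral_eq_Suc Ivs_mem)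


definition chainE :: "nat \<Rightarrow> (nat \<Rightarrow> nat) \<Rightarrow> (nat \<times> nat) set set" where
  "chainE n x = {{(i, j), (i, (j + 1) mod 6)} | i j. i < n \<and> j < 6} \<union> {{(i, x i), (i + 1, 0)} | i. i + 1 < n}"

lemma pc_edges_chainE: "pc_edges n ds = chainE n (pc_exit ds)"
  unfolding pc_edges_def chainE_def ..

lemma pcV_Suc: "pc_vertices (Suc n) = pc_vertices n \<union> PV n 6"
  unfolding pc_vertices_def PV_def by (auto simp: less_Suc_eq)

lemma pcV_1: "pc_vertices (Suc 0) = PV 0 6"
  unfolding pc_vertices_def PV_def by auto

lemma chainE_1: "chainE (Suc 0) x = hexE 0"
  unfolding chainE_def hexE_def by auto

lemma chainE_Suc:
  assumes "n \<ge> 1"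
  shows "chainE (Suc n) x = insert {(n - 1, x (n - 1)), (n, 0)} (chainE n x \<union> hexE n)"
proof -
  have h: "{{(i, j), (i, (j + 1) mod 6)} | i j. i < Suc n \<and> j < 6} =
           {{(i, j), (i, (j + 1) mod 6)} | i j. i < n \<and> j < 6} \<union> hexE n"
    unfolding hexE_def by (auto simp: less_Suc_eq)
  have b: "{{(i, x i), (i + 1, 0)} | i. i + 1 < Suc n} =
           insert {(n - 1, x (n - 1)), (n, 0)} {{(i, x i), (i + 1, 0)} | i. i + 1 < n}"
  proof -
    have "n - 1 + 1 = n" using assms by simp
    then show ?thesis by (auto simp: less_Suc_eq)
  qed
  show ?thesis unfolding chainE_def h b by blast
qed

lemma chainE_sub:
  assumes "\<forall>i. i + 1 < n \<longrightarrow> x i < 6"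
  shows "\<forall>f\<in>chainE n x. f \<subseteq> pc_vertices n"
  using assms unfolding chainE_def pc_vertices_def by auto

lemma chainE_form: "\<forall>f\<in>chainE n x. \<exists>u v. f = {u, v}"
  unfolding chainE_def by blast

lemma hexE_form: "\<forall>f\<in>hexE i. \<exists>u v. f = {u, v}"
  unfolding hexE_def by blast

lemma hexE_sub: "\<forall>f\<in>hexE i. f \<subseteq> PV i 6"
  unfolding hexE_def PV_def by auto

lemma finite_pcV: "finite (pc_vertices n)"
  unfolding pc_vertices_def by (rule finite_subset[of _ "{..<n} \<times> {..<6}"]) auto

lemma finite_hexE: "finite (hexE i)"
proof -
  have "hexE i = (\<lambda>j. {(i, j), (i, (j + 1) mod 6)}) ` {..<6}" unfolding hexE_def by auto
  then show ?thesis by simp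
qed

lemma finite_chainE: "finite (chainE n x)"
proof -
  have "{{(i, j), (i, (j + 1) mod 6)} | i j. i < n \<and> j < (6::nat)} =
        (\<lambda>(i, j). {(i, j), (i, (j + 1) mod 6)}) ` ({..<n} \<times> {..<6})" by auto
  moreover have "{{(i, x i), (i + 1, 0)} | i. i + 1 < n} = (\<lambda>i. {(i, x i), (i + 1, 0)}) ` {i. i + 1 < n}"
    by auto
  moreover have "finite {i. i + 1 < n}" by (rule finite_subset[of _ "{..<n}"]) auto
  ultimately show ?thesis unfolding chainE_def by simp
qed

lemma pcV_PV_disj: "pc_vertices n \<inter> PV n 6 = {}"
  unfolding pc_vertices_def PV_def by auto

definition NN :: "nat \<Rightarrow> (nat \<Rightarrow> nat) \<Rightarrow> (nat \<times> nat) set \<Rightarrow> nat" where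
  "NN n x R = card {T \<in> subtrees (pc_vertices n) (chainE n x). R \<subseteq> fst T}"

lemma chain_step:
  assumes n: "n \<ge> 1" and x: "\<forall>i<n. x i < 6" and R: "R \<subseteq> PV n 6"
  shows "NN (Suc n) x R = NN n x R + card {T \<in> subtrees (PV n 6) (hexE n). R \<subseteq> fst T} +
           NN n x {(n - 1, x (n - 1))} * card {T \<in> subtrees (PV n 6) (hexE n). insert (n, 0) R \<subseteq> fst T}"
proof -
  have a: "(n - 1, x (n - 1)) \<in> pc_vertices n" using n x unfolding pc_vertices_def by auto
  have b: "(n, 0) \<in> PV n 6" unfolding PV_def by auto
  have xs: "\<forall>i. i + 1 < n \<longrightarrow> x i < 6" using x by auto
  show ?thesis
    unfolding NN_def pcV_Suc chainE_Suc[OF n]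
    using bridge_count[OF pcV_PV_disj chainE_sub[OF xs] hexE_sub chainE_form hexE_form a b
          finite_pcV finite_PV finite_chainE finite_hexE R] by simp
qed

lemma NN_out:
  assumes "R \<subseteq> PV n 6" "R \<noteq> {}"
  shows "NN n x R = 0"
proof -
  have "{T \<in> subtrees (pc_vertices n) (chainE n x). R \<subseteq> fst T} = {}"
  proof (rule ccontr)
    assume "{T \<in> subtrees (pc_vertices n) (chainE n x). R \<subseteq> fst T} \<noteq> {}"
    then obtain T where "T \<in> subtrees (pc_vertices n) (chainE n x)" "R \<subseteq> fst T" by blast
    then have "R \<subseteq> pc_vertices n" using subtree_fst by blast
    then show False using assms pcV_PV_disj[of n] by blast
  qed
  then show ?thesis unfolding NN_def by (metis card.empty)
qed

definition hc :: "nat \<Rightarrow> nat" where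
  "hc j = (if j = 1 then 16 else if j = 2 then 13 else 12)"

lemma chain_step_S:
  assumes n: "n \<ge> 1" and x: "\<forall>i<n. x i < 6"
  shows "NN (Suc n) x {} = NN n x {} + 36 + 21 * NN n x {(n - 1, x (n - 1))}"
  using chain_step[OF n x, of "{}"] hex_all[of n] hex_v0[of n] by simp

lemma chain_step_A:
  assumes n: "n \<ge> 1" and x: "\<forall>i<n. x i < 6" and j: "j \<in> {1, 2, 3}"
  shows "NN (Suc n) x {(n, j)} = 21 + hc j * NN n x {(n - 1, x (n - 1))}"
proof -
  have R: "{(n, j)} \<subseteq> PV n 6" using j unfolding PV_def by auto
  have z: "NN n x {(n, j)} = 0" by (rule NN_out[OF R]) simp
  have "card {T \<in> subtrees (PV n 6) (hexE n). {(n, j)} \<subseteq> fst T} = 21"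
    using j hex_v1[of n] hex_v2[of n] hex_v3[of n] by auto
  moreover have "card {T \<in> subtrees (PV n 6) (hexE n). insert (n, 0) {(n, j)} \<subseteq> fst T} = hc j"
    using j hex_e1[of n] hex_e2[of n] hex_e3[of n] by (auto simp: hc_def)
  ultimately show ?thesis using chain_step[OF n x R] z by simp
qed

lemma chain_1_S: "NN (Suc 0) x {} = 36"
  unfolding NN_def pcV_1 chainE_1 by (rule hex_all)

lemma chain_1_A: "NN (Suc 0) x {(0, 0)} = 21"
  unfolding NN_def pcV_1 chainE_1 by (rule hex_v0)


lemma chainE_cong:
  assumes "\<forall>i. i + 1 < n \<longrightarrow> x i = y i"
  shows "chainE n x = chainE n y"
proof -
  have "{{(i, x i), (i + 1, 0)} | i. i + 1 < n} = {{(i, y i), (i + 1, 0)} | i. i + 1 < n}"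
  proof (rule set_eqI)
    fix f
    show "f \<in> {{(i, x i), (i + 1, 0)} | i. i + 1 < n} \<longleftrightarrow> f \<in> {{(i, y i), (i + 1, 0)} | i. i + 1 < n}"
    proof
      assume "f \<in> {{(i, x i), (i + 1, 0)} | i. i + 1 < n}"
      then obtain i where "f = {(i, x i), (i + 1, 0)}" "i + 1 < n" by blast
      moreover then have "x i = y i" using assms by blast
      ultimately show "f \<in> {{(i, y i), (i + 1, 0)} | i. i + 1 < n}" by auto
    next
      assume "f \<in> {{(i, y i), (i + 1, 0)} | i. i + 1 < n}"
      then obtain i where "f = {(i, y i), (i + 1, 0)}" "i + 1 < n" by blast
      moreover then have "x i = y i" using assms by blast
      ultimately show "f \<in> {{(i, x i), (i + 1, 0)} | i. i + 1 < n}" by auto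
    qed
  qed
  then show ?thesis unfolding chainE_def by simp
qed

lemma ds_facts:
  assumes n: "n \<ge> 2" and len: "length ds = n - 2" and sds: "set ds \<subseteq> {1, 2, 3}" and d: "d \<in> {1, 2, 3}"
  shows "chainE n (pc_exit (ds @ [d])) = chainE n (pc_exit ds)"
    and "pc_exit (ds @ [d]) (n - 1) = d"
    and "\<forall>i<n. pc_exit (ds @ [d]) i < 6"
proof -
  show "chainE n (pc_exit (ds @ [d])) = chainE n (pc_exit ds)"
  proof (rule chainE_cong, intro allI impI)
    fix i assume i: "i + 1 < n"
    show "pc_exit (ds @ [d]) i = pc_exit ds i"
    proof (cases i)
      case 0 then show ?thesis by (simp add: pc_exit_def)
    next
      case (Suc k)
      then have "k < length ds" using i len by simp
      then show ?thesis using Suc by (simp add: pc_exit_def nth_append)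
    qed
  qed
  show "pc_exit (ds @ [d]) (n - 1) = d"
  proof -
    have "n - 1 \<noteq> 0" "n - 1 - 1 = length ds" using n len by auto
    then show ?thesis unfolding pc_exit_def by (simp add: nth_append)
  qed
  show "\<forall>i<n. pc_exit (ds @ [d]) i < 6"
  proof (intro allI impI)
    fix i assume i: "i < n"
    show "pc_exit (ds @ [d]) i < 6"
    proof (cases i)
      case 0 then show ?thesis by (simp add: pc_exit_def)
    next
      case (Suc k)
      then have k: "k < length (ds @ [d])" using i len n by simp
      then have "(ds @ [d]) ! k \<in> set (ds @ [d])" by (rule nth_mem)
      then have "(ds @ [d]) ! k \<in> {1, 2, 3}" using sds d by auto
      then show ?thesis using Suc by (auto simp: pc_exit_def)
    qed
  qed
qed

lemma ds_step_S:
  assumes n: "n \<ge> 2" and len: "length ds = n - 2" and sds: "set ds \<subseteq> {1, 2, 3}" and d: "d \<in> {1, 2, 3}"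
  shows "NN (Suc n) (pc_exit (ds @ [d])) {} = NN n (pc_exit ds) {} + 36 + 21 * NN n (pc_exit ds) {(n - 1, d)}"
proof -
  note f = ds_facts[OF n len sds d]
  have n1: "n \<ge> 1" using n by simp
  show ?thesis using chain_step_S[OF n1 f(3)] unfolding NN_def f(1) f(2) .
qed

lemma ds_step_A:
  assumes n: "n \<ge> 2" and len: "length ds = n - 2" and sds: "set ds \<subseteq> {1, 2, 3}" and d: "d \<in> {1, 2, 3}"
    and j: "j \<in> {1, 2, 3}"
  shows "NN (Suc n) (pc_exit (ds @ [d])) {(Suc n - 1, j)} = 21 + hc j * NN n (pc_exit ds) {(n - 1, d)}"
proof -
  note f = ds_facts[OF n len sds d]
  have n1: "n \<ge> 1" using n by simp
  show ?thesis using chain_step_A[OF n1 f(3) j] unfolding NN_def f(1) f(2) by simp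
qed

lemma base2_S: "NN 2 (pc_exit []) {} = 513"
proof -
  have x: "\<forall>i<Suc 0. pc_exit [] i < 6" by (simp add: pc_exit_def)
  have "NN (Suc (Suc 0)) (pc_exit []) {} = NN (Suc 0) (pc_exit []) {} + 36 + 21 * NN (Suc 0) (pc_exit []) {(0, pc_exit [] 0)}"
    using chain_step_S[OF _ x] by simp
  also have "\<dots> = 513" using chain_1_S chain_1_A by (simp add: pc_exit_def)
  finally show ?thesis by (simp add: numeral_2_eq_2)
qed

lemma base2_A: "j \<in> {1, 2, 3} \<Longrightarrow> NN 2 (pc_exit []) {(2 - 1, j)} = 21 + hc j * 21"
proof -
  assume j: "j \<in> {1, 2, 3}"
  have x: "\<forall>i<Suc 0. pc_exit [] i < 6" by (simp add: pc_exit_def)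
  have "NN (Suc (Suc 0)) (pc_exit []) {(Suc 0, j)} = 21 + hc j * NN (Suc 0) (pc_exit []) {(0, pc_exit [] 0)}"
    using chain_step_A[OF _ x j] by simp
  also have "\<dots> = 21 + hc j * 21" using chain_1_A by (simp add: pc_exit_def)
  finally show ?thesis by (simp add: numeral_2_eq_2)
qed

lemma STN_NN: "STN (pc_vertices n) (pc_edges n ds) = NN n (pc_exit ds) {}"
  unfolding STN_def NN_def pc_edges_chainE by simp

lemma out_Suc:
  assumes n: "n \<ge> 2"
  shows "rpc_outcomes (Suc n) = (\<lambda>(ds, d). ds @ [d]) ` (rpc_outcomes n \<times> {1, 2, 3})"
proof
  show "rpc_outcomes (Suc n) \<subseteq> (\<lambda>(ds, d). ds @ [d]) ` (rpc_outcomes n \<times> {1, 2, 3})"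
  proof
    fix ds' assume ds': "ds' \<in> rpc_outcomes (Suc n)"
    then have l: "length ds' = n - 1" and s: "set ds' \<subseteq> {1, 2, 3}" unfolding rpc_outcomes_def by auto
    then have ne: "ds' \<noteq> []" using n by auto
    have e: "ds' = butlast ds' @ [last ds']" using ne by simp
    have "butlast ds' \<in> rpc_outcomes n" unfolding rpc_outcomes_def using l s
      by (auto dest: in_set_butlastD)
    moreover have "last ds' \<in> {1, 2, 3}" using s ne last_in_set by blast
    ultimately show "ds' \<in> (\<lambda>(ds, d). ds @ [d]) ` (rpc_outcomes n \<times> {1, 2, 3})"
      using e by (metis (no_types, lifting) SigmaI case_prod_conv image_eqI)
  qed
  show "(\<lambda>(ds, d). ds @ [d]) ` (rpc_outcomes n \<times> {1, 2, 3}) \<subseteq> rpc_outcomes (Suc n)"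
    using n unfolding rpc_outcomes_def by auto
qed

lemma out_inj: "inj_on (\<lambda>(ds, d). ds @ [d]) A"
  by (rule inj_onI) auto

lemma sum_out_Suc:
  assumes n: "n \<ge> 2"
  shows "(\<Sum>ds\<in>rpc_outcomes (Suc n). f ds) = (\<Sum>ds\<in>rpc_outcomes n. \<Sum>d\<in>{1, 2, 3}. f (ds @ [d]))"
proof -
  have "(\<Sum>ds\<in>rpc_outcomes (Suc n). f ds) = (\<Sum>p\<in>rpc_outcomes n \<times> {1, 2, 3}. f ((\<lambda>(ds, d). ds @ [d]) p))"
    unfolding out_Suc[OF n] by (rule sum.reindex[OF out_inj, unfolded comp_def])
  also have "\<dots> = (\<Sum>(ds, d)\<in>rpc_outcomes n \<times> {1, 2, 3}. f (ds @ [d]))"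
    by (rule sum.cong) auto
  also have "\<dots> = (\<Sum>ds\<in>rpc_outcomes n. \<Sum>d\<in>{1, 2, 3}. f (ds @ [d]))"
    by (rule sum.cartesian_product[symmetric])
  finally show ?thesis .
qed

lemma out_2: "rpc_outcomes 2 = {[]}" and out_1: "rpc_outcomes 1 = {[]}"
  unfolding rpc_outcomes_def by auto


definition wt :: "real \<Rightarrow> real \<Rightarrow> nat list \<Rightarrow> real" where
  "wt p1 p2 ds = (\<Prod>d\<leftarrow>ds. type_prob p1 p2 d)"

definition WW :: "real \<Rightarrow> real \<Rightarrow> nat \<Rightarrow> real" where
  "WW p1 p2 n = (\<Sum>ds\<in>rpc_outcomes n. wt p1 p2 ds)"

definition ES :: "real \<Rightarrow> real \<Rightarrow> nat \<Rightarrow> real" where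
  "ES p1 p2 n = (\<Sum>ds\<in>rpc_outcomes n. wt p1 p2 ds * real (NN n (pc_exit ds) {}))"

definition EA :: "real \<Rightarrow> real \<Rightarrow> nat \<Rightarrow> real" where
  "EA p1 p2 n = (\<Sum>ds\<in>rpc_outcomes n. wt p1 p2 ds *
      (\<Sum>d\<in>{1, 2, 3}. type_prob p1 p2 d * real (NN n (pc_exit ds) {(n - 1, d)})))"

lemma wt_snoc: "wt p1 p2 (ds @ [d]) = wt p1 p2 ds * type_prob p1 p2 d"
  unfolding wt_def by simp

lemma out_mem: "ds \<in> rpc_outcomes n \<Longrightarrow> length ds = n - 2 \<and> set ds \<subseteq> {1, 2, 3}"
  unfolding rpc_outcomes_def by simp

lemma WW_Suc: "n \<ge> 2 \<Longrightarrow> WW p1 p2 (Suc n) = WW p1 p2 n"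
proof -
  assume n: "n \<ge> 2"
  have "WW p1 p2 (Suc n) = (\<Sum>ds\<in>rpc_outcomes n. \<Sum>d\<in>{1, 2, 3}. wt p1 p2 (ds @ [d]))"
    unfolding WW_def by (rule sum_out_Suc[OF n])
  also have "\<dots> = (\<Sum>ds\<in>rpc_outcomes n. wt p1 p2 ds)"
    by (rule sum.cong[OF refl]) (simp add: wt_snoc type_prob_def algebra_simps)
  finally show ?thesis unfolding WW_def .
qed

lemma ES_Suc: "n \<ge> 2 \<Longrightarrow> ES p1 p2 (Suc n) = ES p1 p2 n + 36 * WW p1 p2 n + 21 * EA p1 p2 n"
proof -
  assume n: "n \<ge> 2"
  have "ES p1 p2 (Suc n) = (\<Sum>ds\<in>rpc_outcomes n. \<Sum>d\<in>{1, 2, 3}.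
          wt p1 p2 (ds @ [d]) * real (NN (Suc n) (pc_exit (ds @ [d])) {}))"
    unfolding ES_def by (rule sum_out_Suc[OF n])
  also have "\<dots> = (\<Sum>ds\<in>rpc_outcomes n. wt p1 p2 ds * real (NN n (pc_exit ds) {}) + 36 * wt p1 p2 ds +
       21 * (wt p1 p2 ds * (\<Sum>d\<in>{1, 2, 3}. type_prob p1 p2 d * real (NN n (pc_exit ds) {(n - 1, d)}))))"
  proof (rule sum.cong[OF refl])
    fix ds assume ds: "ds \<in> rpc_outcomes n"
    note o = out_mem[OF ds]
    have st: "NN (Suc n) (pc_exit (ds @ [d])) {} = NN n (pc_exit ds) {} + 36 + 21 * NN n (pc_exit ds) {(n - 1, d)}"
      if "d \<in> {1, 2, 3}" for d
      using ds_step_S[OF n conjunct1[OF o] conjunct2[OF o] that] .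
    have "(\<Sum>d\<in>{1, 2, 3}. wt p1 p2 (ds @ [d]) * real (NN (Suc n) (pc_exit (ds @ [d])) {})) =
          (\<Sum>d\<in>{1, 2, 3}. wt p1 p2 ds * type_prob p1 p2 d *
              (real (NN n (pc_exit ds) {}) + 36 + 21 * real (NN n (pc_exit ds) {(n - 1, d)})))"
    proof (rule sum.cong[OF refl])
      fix d :: nat assume d: "d \<in> {1, 2, 3}"
      show "wt p1 p2 (ds @ [d]) * real (NN (Suc n) (pc_exit (ds @ [d])) {}) =
          wt p1 p2 ds * type_prob p1 p2 d *
              (real (NN n (pc_exit ds) {}) + 36 + 21 * real (NN n (pc_exit ds) {(n - 1, d)}))"
        unfolding st[OF d] wt_snoc by simp
    qed
    also have "\<dots> = wt p1 p2 ds * real (NN n (pc_exit ds) {}) + 36 * wt p1 p2 ds +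
       21 * (wt p1 p2 ds * (\<Sum>d\<in>{1, 2, 3}. type_prob p1 p2 d * real (NN n (pc_exit ds) {(n - 1, d)})))"
      by (simp add: type_prob_def algebra_simps)
    finally show "(\<Sum>d\<in>{1, 2, 3}. wt p1 p2 (ds @ [d]) * real (NN (Suc n) (pc_exit (ds @ [d])) {})) =
       wt p1 p2 ds * real (NN n (pc_exit ds) {}) + 36 * wt p1 p2 ds +
       21 * (wt p1 p2 ds * (\<Sum>d\<in>{1, 2, 3}. type_prob p1 p2 d * real (NN n (pc_exit ds) {(n - 1, d)})))" .
  qed
  also have "\<dots> = ES p1 p2 n + 36 * WW p1 p2 n + 21 * EA p1 p2 n"
    unfolding ES_def WW_def EA_def by (simp add: sum.distrib sum_distrib_left)
  finally show ?thesis .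
qed

lemma EA_Suc: "n \<ge> 2 \<Longrightarrow> EA p1 p2 (Suc n) = 21 * WW p1 p2 n + (12 + 4 * p1 + p2) * EA p1 p2 n"
proof -
  assume n: "n \<ge> 2"
  have "EA p1 p2 (Suc n) = (\<Sum>ds\<in>rpc_outcomes n. \<Sum>d\<in>{1, 2, 3}. wt p1 p2 (ds @ [d]) *
      (\<Sum>j\<in>{1, 2, 3}. type_prob p1 p2 j * real (NN (Suc n) (pc_exit (ds @ [d])) {(Suc n - 1, j)})))"
    unfolding EA_def by (rule sum_out_Suc[OF n])
  also have "\<dots> = (\<Sum>ds\<in>rpc_outcomes n. 21 * wt p1 p2 ds + (12 + 4 * p1 + p2) *
      (wt p1 p2 ds * (\<Sum>d\<in>{1, 2, 3}. type_prob p1 p2 d * real (NN n (pc_exit ds) {(n - 1, d)}))))"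
  proof (rule sum.cong[OF refl])
    fix ds assume ds: "ds \<in> rpc_outcomes n"
    note o = out_mem[OF ds]
    have st: "NN (Suc n) (pc_exit (ds @ [d])) {(Suc n - 1, j)} = 21 + hc j * NN n (pc_exit ds) {(n - 1, d)}"
      if "d \<in> {1, 2, 3}" "j \<in> {1, 2, 3}" for d j
      using ds_step_A[OF n conjunct1[OF o] conjunct2[OF o] that] .
    have inner: "(\<Sum>j\<in>{1, 2, 3}. type_prob p1 p2 j * real (NN (Suc n) (pc_exit (ds @ [d])) {(Suc n - 1, j)})) =
        21 + (12 + 4 * p1 + p2) * real (NN n (pc_exit ds) {(n - 1, d)})" if d: "d \<in> {1, 2, 3}" for d
    proof -
      have "(\<Sum>j\<in>{1, 2, 3}. type_prob p1 p2 j * real (NN (Suc n) (pc_exit (ds @ [d])) {(Suc n - 1, j)})) =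
            (\<Sum>j\<in>{1, 2, 3}. type_prob p1 p2 j * (21 + real (hc j) * real (NN n (pc_exit ds) {(n - 1, d)})))"
      proof (rule sum.cong[OF refl])
        fix j :: nat assume j: "j \<in> {1, 2, 3}"
        have "real (NN (Suc n) (pc_exit (ds @ [d])) {(Suc n - 1, j)}) =
              21 + real (hc j) * real (NN n (pc_exit ds) {(n - 1, d)})"
          unfolding st[OF d j] by simp
        then show "type_prob p1 p2 j * real (NN (Suc n) (pc_exit (ds @ [d])) {(Suc n - 1, j)}) =
            type_prob p1 p2 j * (21 + real (hc j) * real (NN n (pc_exit ds) {(n - 1, d)}))" by simp
      qed
      also have "\<dots> = 21 + (12 + 4 * p1 + p2) * real (NN n (pc_exit ds) {(n - 1, d)})"
        by (simp add: type_prob_def hc_def algebra_simps)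
      finally show ?thesis .
    qed
    have "(\<Sum>d\<in>{1, 2, 3}. wt p1 p2 (ds @ [d]) *
      (\<Sum>j\<in>{1, 2, 3}. type_prob p1 p2 j * real (NN (Suc n) (pc_exit (ds @ [d])) {(Suc n - 1, j)}))) =
          (\<Sum>d\<in>{1, 2, 3}. wt p1 p2 ds * type_prob p1 p2 d *
              (21 + (12 + 4 * p1 + p2) * real (NN n (pc_exit ds) {(n - 1, d)})))"
    proof (rule sum.cong[OF refl])
      fix d :: nat assume d: "d \<in> {1, 2, 3}"
      show "wt p1 p2 (ds @ [d]) *
        (\<Sum>j\<in>{1, 2, 3}. type_prob p1 p2 j * real (NN (Suc n) (pc_exit (ds @ [d])) {(Suc n - 1, j)})) =
        wt p1 p2 ds * type_prob p1 p2 d * (21 + (12 + 4 * p1 + p2) * real (NN n (pc_exit ds) {(n - 1, d)}))"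
        unfolding inner[OF d] wt_snoc ..
    qed
    also have "\<dots> = 21 * wt p1 p2 ds + (12 + 4 * p1 + p2) *
      (wt p1 p2 ds * (\<Sum>d\<in>{1, 2, 3}. type_prob p1 p2 d * real (NN n (pc_exit ds) {(n - 1, d)})))"
      by (simp add: type_prob_def algebra_simps)
    finally show "(\<Sum>d\<in>{1, 2, 3}. wt p1 p2 (ds @ [d]) *
      (\<Sum>j\<in>{1, 2, 3}. type_prob p1 p2 j * real (NN (Suc n) (pc_exit (ds @ [d])) {(Suc n - 1, j)}))) =
      21 * wt p1 p2 ds + (12 + 4 * p1 + p2) *
      (wt p1 p2 ds * (\<Sum>d\<in>{1, 2, 3}. type_prob p1 p2 d * real (NN n (pc_exit ds) {(n - 1, d)})))" .
  qed
  also have "\<dots> = 21 * WW p1 p2 n + (12 + 4 * p1 + p2) * EA p1 p2 n"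
    unfolding WW_def EA_def by (simp add: sum.distrib sum_distrib_left)
  finally show ?thesis .
qed

lemma base2:
  "WW p1 p2 2 = 1" "ES p1 p2 2 = 513" "EA p1 p2 2 = 21 + 21 * (12 + 4 * p1 + p2)"
proof -
  show "WW p1 p2 2 = 1" unfolding WW_def out_2 wt_def by simp
  show "ES p1 p2 2 = 513" unfolding ES_def out_2 wt_def using base2_S by simp
  have "EA p1 p2 2 = (\<Sum>d\<in>{1, 2, 3}. type_prob p1 p2 d * real (NN 2 (pc_exit []) {(2 - 1, d)}))"
    unfolding EA_def out_2 wt_def by simp
  also have "\<dots> = (\<Sum>d\<in>{1, 2, 3}. type_prob p1 p2 d * (21 + real (hc d) * 21))"
  proof (rule sum.cong[OF refl])
    fix j :: nat assume j: "j \<in> {1, 2, 3}"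
    have "real (NN 2 (pc_exit []) {(2 - 1, j)}) = 21 + real (hc j) * 21"
      unfolding base2_A[OF j] by simp
    then show "type_prob p1 p2 j * real (NN 2 (pc_exit []) {(2 - 1, j)}) =
        type_prob p1 p2 j * (21 + real (hc j) * 21)" by simp
  qed
  also have "\<dots> = 21 + 21 * (12 + 4 * p1 + p2)"
    by (simp add: type_prob_def hc_def algebra_simps)
  finally show "EA p1 p2 2 = 21 + 21 * (12 + 4 * p1 + p2)" .
qed


lemma alg1: "(r::real) \<noteq> 0 \<Longrightarrow> 21 + 21 * (r + 1) = 21 * ((r + 1) ^ 2 - 1) / r"
  by (simp add: field_simps power2_eq_square)

lemma alg2: "(r::real) \<noteq> 0 \<Longrightarrow> 513 = 441 / r^2 * (r + 1) ^ 2 + (36 * r - 441) / r * 2 - 441 / r^2"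
  by (simp add: field_simps power2_eq_square)

lemma alg3: "(r::real) \<noteq> 0 \<Longrightarrow> 21 + (r + 1) * (21 * (X - 1) / r) = 21 * ((r + 1) * X - 1) / r"
  by (simp add: field_simps)

lemma alg4: "(r::real) \<noteq> 0 \<Longrightarrow>
  (441 / r^2 * X + (36 * r - 441) / r * m - 441 / r^2) + 36 + 21 * (21 * (X - 1) / r) =
  441 / r^2 * ((r + 1) * X) + (36 * r - 441) / r * (m + 1) - 441 / r^2"
  by (simp add: field_simps power2_eq_square)

lemma alg5: "(r::real) \<noteq> 0 \<Longrightarrow> 36 = 441 / r^2 * (r + 1) + (36 * r - 441) / r - 441 / r^2"
  by (simp add: field_simps power2_eq_square)

lemma closed_forms_r:
  fixes p1 p2 r :: real
  assumes r: "r \<noteq> 0" and rdef: "r = 11 + 4 * p1 + p2" and n: "n \<ge> 2"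
  shows "WW p1 p2 n = 1 \<and>
         EA p1 p2 n = 21 * ((r + 1) ^ n - 1) / r \<and>
         ES p1 p2 n = 441 / r^2 * (r + 1) ^ n + (36 * r - 441) / r * real n - 441 / r^2"
  using n
proof (induction n rule: nat_induct_at_least)
  case base
  have q: "12 + 4 * p1 + p2 = r + 1" using rdef by simp
  have b: "WW p1 p2 2 = 1" "ES p1 p2 2 = 513" "EA p1 p2 2 = 21 + 21 * (r + 1)"
    using base2[of p1 p2] unfolding q by simp_all
  show ?case using b alg1[OF r] alg2[OF r] by simp
next
  case (Suc n)
  have q: "12 + 4 * p1 + p2 = r + 1" using rdef by simp
  have IH: "WW p1 p2 n = 1" "EA p1 p2 n = 21 * ((r + 1) ^ n - 1) / r"
    "ES p1 p2 n = 441 / r^2 * (r + 1) ^ n + (36 * r - 441) / r * real n - 441 / r^2"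
    using Suc.IH by auto
  have w: "WW p1 p2 (Suc n) = 1" using WW_Suc[OF Suc.hyps] IH(1) by simp
  have a: "EA p1 p2 (Suc n) = 21 * ((r + 1) ^ Suc n - 1) / r"
    using EA_Suc[OF Suc.hyps, of p1 p2] IH(1,2) alg3[OF r, of "(r + 1) ^ n"] unfolding q by simp
  have e: "ES p1 p2 (Suc n) = 441 / r^2 * (r + 1) ^ Suc n + (36 * r - 441) / r * real (Suc n) - 441 / r^2"
    using ES_Suc[OF Suc.hyps, of p1 p2] IH alg4[OF r, of "(r + 1) ^ n" "real n"] by simp
  show ?case using w a e by simp
qed

theorem theorem4:
  fixes p1 p2 :: real and n :: nat
  assumes "p1 \<ge> 0" and "p2 \<ge> 0" and "p1 + p2 \<le> 1" and "n \<ge> 1"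
  shows "expected_STN_RPC n p1 p2 =
           441 / (11 + 4 * p1 + p2)^2 * (12 + 4 * p1 + p2) ^ n
         + (144 * p1 + 36 * p2 - 45) / (11 + 4 * p1 + p2) * real n
         - 441 / (11 + 4 * p1 + p2)^2"
proof -
  have r: "11 + 4 * p1 + p2 \<noteq> 0" using assms by linarith
  have E: "expected_STN_RPC n p1 p2 = ES p1 p2 n"
    unfolding expected_STN_RPC_def ES_def wt_def STN_NN ..
  define rr where "rr = 11 + 4 * p1 + p2"
  have rr0: "rr \<noteq> 0" using r rr_def by simp
  have q: "12 + 4 * p1 + p2 = rr + 1" and c: "144 * p1 + 36 * p2 - 45 = 36 * rr - 441"
    using rr_def by simp_all
  show ?thesis
    unfolding q c rr_def[symmetric] E
  proof (cases "n = 1")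
    case True
    have "ES p1 p2 1 = 36" unfolding ES_def out_1 wt_def using chain_1_S by simp
    then show "ES p1 p2 n = 441 / rr\<^sup>2 * (rr + 1) ^ n + (36 * rr - 441) / rr * real n - 441 / rr\<^sup>2"
      using True alg5[OF rr0] by simp
  next
    case False
    then have "n \<ge> 2" using assms(4) by simp
    then show "ES p1 p2 n = 441 / rr\<^sup>2 * (rr + 1) ^ n + (36 * rr - 441) / rr * real n - 441 / rr\<^sup>2"
      using closed_forms_r[OF rr0 rr_def] by blast
  qed
qed


end
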